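(* Let $X$ be a compact complex manifold of dimension $n$ with Kähler form $\omega$, $D\subset\mathbb{C}^m$ open with coordinates $z_1,\dots,z_m$, and let $u$ be a $C^2$ real function on $D\times X$ with $\omega+i\partial\bar\partial u(z,\cdot)>0$ on $X$ for all $z\in D$. Let $x=(x_1,\dots,x_n)$ be local holomorphic coordinates on an open set $W\subset X$ on which $\psi$ is a local potential of $\omega$. Then for every holomorphic map $f$ from an open subset of $D$ into $W$, $$\Delta\big(\psi(f(z))+u(z,f(z))\big)\ \ge\ \sum_{j=1}^m\frac{\det(u+\psi)_j}{\det(\psi_{\mu\bar\lambda}+u_{\mu\bar\lambda})}\Big|_{(z,f(z))}.$$ Moreover, for every $(z_0,x_0)\in D\times W$ there is such an $f$, defined near $z_0$, with $f(z_0)=x_0$ and $$\Delta\big(\psi(f(z))+u(z,f(z))\big)\big|_{z_0}=\sum_{j=1}^m\frac{\det(u+\psi)_j}{\det(\psi_{\mu\bar\lambda}+u_{\mu\bar\lambda})}\Big|_{(z_0,x_0)}.$$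
   Context: $\Delta=\sum_{i=1}^m\partial^2/\partial z_i\partial\bar z_i$. A local potential of $\omega$ on $W$ is a smooth real $\psi$ with $i\partial\bar\partial\psi=\omega$ on $W$. Here $u_{\mu\bar\lambda}=\partial^2u/\partial x_\mu\partial\bar x_\lambda$, $\psi_{\mu\bar\lambda}=\partial^2\psi/\partial x_\mu\partial\bar x_\lambda$, and $(u+\psi)_j$ denotes the $(n+1)\times(n+1)$ complex Hessian of $u+\psi$ in the variables $(z_j,x_1,\dots,x_n)$, i.e. the matrix with first row $((u+\psi)_{z_j\bar z_j},(u+\psi)_{z_j\bar x_1},\dots,(u+\psi)_{z_j\bar x_n})$ and row $\mu+1$ equal to $((u+\psi)_{x_\mu\bar z_j},(u+\psi)_{x_\mu\bar x_1},\dots,(u+\psi)_{x_\mu\bar x_n})$. *)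

theory Defs
  imports "HOL-Analysis.Analysis"
begin

primrec Ck :: "nat \<Rightarrow> 'a::real_normed_vector set \<Rightarrow> ('a \<Rightarrow> real) \<Rightarrow> bool" where
  "Ck 0 S g = continuous_on S g"
| "Ck (Suc k) S g = ((\<forall>p\<in>S. g differentiable (at p)) \<and>
      (\<forall>v. Ck k S (\<lambda>q. frechet_derivative g (at q) v)))"

definition smooth_on :: "'a::real_normed_vector set \<Rightarrow> ('a \<Rightarrow> real) \<Rightarrow> bool" where
  "smooth_on S g = (\<forall>k. Ck k S g)"

definition d2 :: "('a::real_normed_vector \<Rightarrow> real) \<Rightarrow> 'a \<Rightarrow> 'a \<Rightarrow> 'a \<Rightarrow> real" where
  "d2 g p v w = frechet_derivative (\<lambda>q. frechet_derivative g (at q) v) (at p) w"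

text \<open>Mixed Wirtinger derivative d^2 g / (d a  d conj b) at p, where the complex coordinate
  a has real directions ea (real part) and ia (imaginary part), similarly for b:
  (1/4)(g_{x_a x_b} + g_{y_a y_b} + i (g_{x_a y_b} - g_{y_a x_b})).\<close>
definition wirt :: "('a::real_normed_vector \<Rightarrow> real) \<Rightarrow> 'a \<Rightarrow> 'a \<Rightarrow> 'a \<Rightarrow> 'a \<Rightarrow> 'a \<Rightarrow> complex" where
  "wirt g p ea ia eb ib =
     complex_of_real ((d2 g p ea eb + d2 g p ia ib) / 4)
     + \<i> * complex_of_real ((d2 g p ea ib - d2 g p ia eb) / 4)"

definition cLap :: "(complex^'m \<Rightarrow> real) \<Rightarrow> complex^'m \<Rightarrow> complex" where
  "cLap h z = (\<Sum>j\<in>UNIV. wirt h z (axis j 1) (axis j \<i>) (axis j 1) (axis j \<i>))"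

definition holo_on :: "(complex^'m) set \<Rightarrow> (complex^'m \<Rightarrow> complex^'n) \<Rightarrow> bool" where
  "holo_on U f = (\<forall>p\<in>U. \<exists>L. (f has_derivative L) (at p) \<and> (\<forall>c v. L (c *s v) = c *s L v))"

definition hessX :: "((complex^'m::finite) \<times> (complex^'n::finite) \<Rightarrow> real) \<Rightarrow> (complex^'m::finite) \<times> (complex^'n::finite)
    \<Rightarrow> complex^'n^'n" where
  "hessX F p = (\<chi> mu lam. wirt F p (0, axis mu 1) (0, axis mu \<i>) (0, axis lam 1) (0, axis lam \<i>))"

text \<open>Real directions of the coordinates (z_j, x_1, ..., x_n): index None is z_j,
  index Some mu is x_mu.\<close>
definition dirR :: "'m \<Rightarrow> 'n option \<Rightarrow> (complex^'m::finite) \<times> (complex^'n::finite)" where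
  "dirR j a = (case a of None \<Rightarrow> (axis j 1, 0) | Some mu \<Rightarrow> (0, axis mu 1))"

definition dirI :: "'m \<Rightarrow> 'n option \<Rightarrow> (complex^'m::finite) \<times> (complex^'n::finite)" where
  "dirI j a = (case a of None \<Rightarrow> (axis j \<i>, 0) | Some mu \<Rightarrow> (0, axis mu \<i>))"

definition hessJ :: "((complex^'m::finite) \<times> (complex^'n::finite) \<Rightarrow> real) \<Rightarrow> (complex^'m::finite) \<times> (complex^'n::finite)
    \<Rightarrow> 'm \<Rightarrow> complex^('n::finite option)^('n option)" where
  "hessJ F p j = (\<chi> a b. wirt F p (dirR j a) (dirI j a) (dirR j b) (dirI j b))"

definition pos_herm :: "complex^'n^'n \<Rightarrow> bool" where
  "pos_herm H = (\<forall>\<xi>::complex^'n. \<xi> \<noteq> 0 \<longrightarrow>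
      0 < Re (\<Sum>mu\<in>UNIV. \<Sum>lam\<in>UNIV. H $ mu $ lam * \<xi> $ mu * cnj (\<xi> $ lam)))"

end

theory Submission
  imports Defs "HOL-Complex_Analysis.Complex_Analysis"
begin

lemma fd_eq_open:
  assumes "open S" "\<And>x. x \<in> S \<Longrightarrow> g x = g' x" "p \<in> S" "g differentiable (at p)"
  shows "g' differentiable (at p)" "frechet_derivative g' (at p) = frechet_derivative g (at p)"
proof -
  have "(g has_derivative frechet_derivative g (at p)) (at p)"
    using assms(4) frechet_derivative_works by blast
  then have *: "(g' has_derivative frechet_derivative g (at p)) (at p)"
    using has_derivative_transform_within_open[OF _ assms(1) assms(3)] assms(2) by blast
  then show "g' differentiable (at p)" unfolding differentiable_def by blast
  show "frechet_derivative g' (at p) = frechet_derivative g (at p)"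
    using frechet_derivative_at[OF *] by simp
qed

lemma Ck_cong:
  assumes "open S" "\<And>x. x \<in> S \<Longrightarrow> g x = g' x" "Ck k S g"
  shows "Ck k S g'"
  using assms(2,3)
proof (induction k arbitrary: g g')
  case 0
  then show ?case using continuous_on_cong[of S S g g'] by simp
next
  case (Suc k)
  have d: "\<forall>p\<in>S. g differentiable (at p)" using Suc.prems by simp
  have fe: "\<And>q. q \<in> S \<Longrightarrow> frechet_derivative g' (at q) = frechet_derivative g (at q)"
    using fd_eq_open(2)[of S g g'] assms(1) Suc.prems(1) d by blast
  show ?case
  proof (simp, intro conjI ballI allI)
    fix p assume "p \<in> S"
    then show "g' differentiable (at p)" using fd_eq_open(1)[of S g g'] assms(1) Suc.prems(1) d by blast
  next
    fix v
    have "Ck k S (\<lambda>q. frechet_derivative g (at q) v)" using Suc.prems by simp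
    then show "Ck k S (\<lambda>q. frechet_derivative g' (at q) v)"
      by (rule Suc.IH[rotated]) (simp add: fe)
  qed
qed

lemma Ck_add:
  assumes "open S" "Ck k S g" "Ck k S g'"
  shows "Ck k S (\<lambda>x. g x + g' x)"
  using assms(2,3)
proof (induction k arbitrary: g g')
  case 0
  then show ?case by (simp add: continuous_on_add)
next
  case (Suc k)
  have d: "\<forall>p\<in>S. g differentiable (at p)" "\<forall>p\<in>S. g' differentiable (at p)" using Suc.prems by simp_all
  have hd: "\<And>q. q \<in> S \<Longrightarrow> ((\<lambda>x. g x + g' x) has_derivative
       (\<lambda>v. frechet_derivative g (at q) v + frechet_derivative g' (at q) v)) (at q)"
    using d frechet_derivative_works has_derivative_add by blast
  show ?case
  proof (simp, intro conjI ballI allI)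
    fix p assume "p \<in> S"
    then show "(\<lambda>x. g x + g' x) differentiable (at p)" using hd differentiable_def by blast
  next
    fix v
    have "Ck k S (\<lambda>q. frechet_derivative g (at q) v + frechet_derivative g' (at q) v)"
      using Suc.prems Suc.IH by simp
    then show "Ck k S (\<lambda>q. frechet_derivative (\<lambda>x. g x + g' x) (at q) v)"
      by (rule Ck_cong[OF assms(1), rotated]) (simp add: frechet_derivative_at[OF hd, symmetric])
  qed
qed

lemma Ck_snd:
  fixes g :: "'b::real_normed_vector \<Rightarrow> real" and D :: "'a::real_normed_vector set"
  assumes "open D" "open W" "Ck k W g"
  shows "Ck k (D \<times> W) (\<lambda>p. g (snd p))"
  using assms(3)
proof (induction k arbitrary: g)
  case 0
  then show ?case
  proof -
    have "continuous_on W g" using 0 by simp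
    then show ?thesis
      using continuous_on_compose2[OF _ continuous_on_snd[OF continuous_on_id], of W g "D \<times> W"]
      by auto
  qed
next
  case (Suc k)
  have d: "\<forall>p\<in>W. g differentiable (at p)" using Suc.prems by simp
  have hd: "\<And>q. q \<in> D \<times> W \<Longrightarrow> ((\<lambda>p. g (snd p)) has_derivative
       (\<lambda>v. frechet_derivative g (at (snd q)) (snd v))) (at q)"
  proof -
    fix q :: "'a \<times> 'b" assume "q \<in> D \<times> W"
    then have "(g has_derivative frechet_derivative g (at (snd q))) (at (snd q))"
      using d frechet_derivative_works by (metis SigmaE snd_conv)
    then show "?thesis q"
      using has_derivative_compose[OF has_derivative_snd[OF has_derivative_ident]] by blast
  qed
  show ?case
  proof (simp only: Ck.simps, intro conjI ballI allI)
    fix p assume "p \<in> D \<times> W"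
    then show "(\<lambda>p. g (snd p)) differentiable (at p)" using hd differentiable_def by blast
  next
    fix v :: "'a \<times> 'b"
    have "Ck k (D \<times> W) (\<lambda>q. frechet_derivative g (at (snd q)) (snd v))"
      using Suc.prems Suc.IH[of "\<lambda>y. frechet_derivative g (at y) (snd v)"] by simp
    then show "Ck k (D \<times> W) (\<lambda>q. frechet_derivative (\<lambda>p. g (snd p)) (at q) v)"
      by (rule Ck_cong[OF open_Times[OF assms(1,2)], rotated]) (simp add: frechet_derivative_at[OF hd, symmetric])
  qed
qed

lemma C2_diff: "Ck 2 S g \<Longrightarrow> p \<in> S \<Longrightarrow> g differentiable (at p)"
  by (simp add: numeral_2_eq_2)

lemma C2_diff2: "Ck 2 S g \<Longrightarrow> p \<in> S \<Longrightarrow> (\<lambda>q. frechet_derivative g (at q) v) differentiable (at p)"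
  by (simp add: numeral_2_eq_2)

lemma C2_cont: "Ck 2 S g \<Longrightarrow> continuous_on S (\<lambda>q. d2 g q v w)"
  by (simp add: numeral_2_eq_2 d2_def)

lemma C2_has1: "Ck 2 S g \<Longrightarrow> p \<in> S \<Longrightarrow> (g has_derivative frechet_derivative g (at p)) (at p)"
  using C2_diff frechet_derivative_works by blast

lemma C2_has2: "Ck 2 S g \<Longrightarrow> p \<in> S \<Longrightarrow>
   ((\<lambda>q. frechet_derivative g (at q) v) has_derivative (\<lambda>w. d2 g p v w)) (at p)"
proof -
  assume a: "Ck 2 S g" "p \<in> S"
  have "((\<lambda>q. frechet_derivative g (at q) v) has_derivative
     frechet_derivative (\<lambda>q. frechet_derivative g (at q) v) (at p)) (at p)"
    using C2_diff2[OF a] frechet_derivative_works by blast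
  moreover have "frechet_derivative (\<lambda>q. frechet_derivative g (at q) v) (at p) = (\<lambda>w. d2 g p v w)"
    by (rule ext) (simp add: d2_def)
  ultimately show ?thesis by simp
qed

lemma C2_lin1: "Ck 2 S g \<Longrightarrow> p \<in> S \<Longrightarrow> linear (frechet_derivative g (at p))"
  using C2_has1 has_derivative_linear by blast

lemma d2_linear_w: "Ck 2 S g \<Longrightarrow> p \<in> S \<Longrightarrow> linear (\<lambda>w. d2 g p v w)"
  using C2_has2 has_derivative_linear by blast

lemma d2_linear_v:
  assumes S: "open S" and g: "Ck 2 S g" and p: "p \<in> S"
  shows "linear (\<lambda>v. d2 g p v w)"
proof (rule linearI)
  fix v1 v2
  have "((\<lambda>q. frechet_derivative g (at q) v1 + frechet_derivative g (at q) v2) has_derivative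
      (\<lambda>w. d2 g p v1 w + d2 g p v2 w)) (at p)"
    using C2_has2[OF g p] has_derivative_add by blast
  then have "((\<lambda>q. frechet_derivative g (at q) (v1 + v2)) has_derivative
      (\<lambda>w. d2 g p v1 w + d2 g p v2 w)) (at p)"
    by (rule has_derivative_transform_within_open[OF _ S p])
       (simp add: linear_add[OF C2_lin1[OF g]])
  from fun_cong[OF frechet_derivative_at[OF this], of w]
  show "d2 g p (v1 + v2) w = d2 g p v1 w + d2 g p v2 w" by (simp add: d2_def)
next
  fix c :: real and v
  have "((\<lambda>q. c * frechet_derivative g (at q) v) has_derivative
      (\<lambda>w. c * d2 g p v w)) (at p)"
    using C2_has2[OF g p] has_derivative_mult_right by blast
  then have "((\<lambda>q. frechet_derivative g (at q) (c *\<^sub>R v)) has_derivative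
      (\<lambda>w. c * d2 g p v w)) (at p)"
    by (rule has_derivative_transform_within_open[OF _ S p])
       (simp add: linear_scale[OF C2_lin1[OF g]])
  from fun_cong[OF frechet_derivative_at[OF this], of w]
  show "d2 g p (c *\<^sub>R v) w = c *\<^sub>R d2 g p v w" by (simp add: d2_def)
qed

lemma line_deriv:
  assumes "(g has_derivative G) (at (x0 + t *\<^sub>R v))"
  shows "((\<lambda>t. g (x0 + t *\<^sub>R v)) has_real_derivative G v) (at t)"
proof -
  have l: "((\<lambda>t. x0 + t *\<^sub>R v) has_derivative (\<lambda>h. h *\<^sub>R v)) (at t)"
    by (auto intro!: derivative_eq_intros)
  have "((\<lambda>t. g (x0 + t *\<^sub>R v)) has_derivative (\<lambda>h. G (h *\<^sub>R v))) (at t)"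
    using has_derivative_compose[OF l assms] .
  moreover have "(\<lambda>h. G (h *\<^sub>R v)) = (\<lambda>h. G v * h)"
    using linear_scale[OF has_derivative_linear[OF assms]] by (simp add: mult.commute)
  ultimately show ?thesis by (simp add: has_field_derivative_def)
qed

lemma mvt_step:
  fixes g :: "'a::real_normed_vector \<Rightarrow> real"
  assumes S: "open S" and g: "Ck 2 S g" and s: "s > 0"
    and box: "\<And>a b. 0 \<le> a \<Longrightarrow> a \<le> s \<Longrightarrow> 0 \<le> b \<Longrightarrow> b \<le> s \<Longrightarrow> p + a *\<^sub>R v + b *\<^sub>R w \<in> S"
  shows "\<exists>a b. 0 \<le> a \<and> a \<le> s \<and> 0 \<le> b \<and> b \<le> s \<and>
     g (p + s *\<^sub>R v + s *\<^sub>R w) - g (p + s *\<^sub>R v) - g (p + s *\<^sub>R w) + g p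
       = s\<^sup>2 * d2 g (p + a *\<^sub>R v + b *\<^sub>R w) v w"
proof -
  define G where "G = (\<lambda>q. frechet_derivative g (at q) v)"
  define phi where "phi = (\<lambda>t. g ((p + s *\<^sub>R w) + t *\<^sub>R v) - g (p + t *\<^sub>R v))"
  have "\<And>t. 0 \<le> t \<Longrightarrow> t \<le> s \<Longrightarrow> (phi has_real_derivative
         (G ((p + s *\<^sub>R w) + t *\<^sub>R v) - G (p + t *\<^sub>R v))) (at t)"
  proof -
    fix t assume t: "0 \<le> t" "t \<le> s"
    have i1: "(p + s *\<^sub>R w) + t *\<^sub>R v \<in> S" using box[of t s] t s by (simp add: algebra_simps)
    have i2: "p + t *\<^sub>R v \<in> S" using box[of t 0] t s by simp
    show "?thesis t" unfolding phi_def G_def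
      by (rule DERIV_diff[OF line_deriv[OF C2_has1[OF g i1]] line_deriv[OF C2_has1[OF g i2]]])
  qed
  from MVT2[OF s this] obtain tau where tau: "0 < tau" "tau < s"
    "phi s - phi 0 = (s - 0) * (G ((p + s *\<^sub>R w) + tau *\<^sub>R v) - G (p + tau *\<^sub>R v))"
    by (metis less_eq_real_def)
  have "\<And>b. 0 \<le> b \<Longrightarrow> b \<le> s \<Longrightarrow> ((\<lambda>b. G ((p + tau *\<^sub>R v) + b *\<^sub>R w)) has_real_derivative
         d2 g ((p + tau *\<^sub>R v) + b *\<^sub>R w) v w) (at b)"
  proof -
    fix b assume b: "0 \<le> b" "b \<le> s"
    have "(p + tau *\<^sub>R v) + b *\<^sub>R w \<in> S" using box[of tau b] b tau by simp
    then show "?thesis b" unfolding G_def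
      by (rule line_deriv[OF C2_has2[OF g]])
  qed
  from MVT2[OF s this] obtain sig where sig: "0 < sig" "sig < s"
    "G ((p + tau *\<^sub>R v) + s *\<^sub>R w) - G ((p + tau *\<^sub>R v) + 0 *\<^sub>R w)
       = (s - 0) * d2 g ((p + tau *\<^sub>R v) + sig *\<^sub>R w) v w"
    by (metis less_eq_real_def)
  have "g (p + s *\<^sub>R v + s *\<^sub>R w) - g (p + s *\<^sub>R v) - g (p + s *\<^sub>R w) + g p = phi s - phi 0"
    unfolding phi_def by (simp add: algebra_simps)
  also have "\<dots> = s\<^sup>2 * d2 g (p + tau *\<^sub>R v + sig *\<^sub>R w) v w"
    using tau(3) sig(3) by (simp add: algebra_simps power2_eq_square)
  finally show ?thesis using tau sig by (intro exI[of _ tau] exI[of _ sig]) simp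
qed

lemma schwarz:
  fixes g :: "'a::real_normed_vector \<Rightarrow> real"
  assumes S: "open S" and g: "Ck 2 S g" and p: "p \<in> S"
  shows "d2 g p v w = d2 g p w v"
proof (rule ccontr)
  assume ne: "d2 g p v w \<noteq> d2 g p w v"
  define e where "e = \<bar>d2 g p v w - d2 g p w v\<bar> / 2"
  have e: "e > 0" using ne by (simp add: e_def)
  obtain d1 where d1: "d1 > 0" "\<And>x. x \<in> S \<Longrightarrow> dist x p < d1 \<Longrightarrow> dist (d2 g x v w) (d2 g p v w) < e"
    using C2_cont[OF g, of v w] p e unfolding continuous_on_iff by metis
  obtain d2' where d2': "d2' > 0" "\<And>x. x \<in> S \<Longrightarrow> dist x p < d2' \<Longrightarrow> dist (d2 g x w v) (d2 g p w v) < e"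
    using C2_cont[OF g, of w v] p e unfolding continuous_on_iff by metis
  obtain d3 where d3: "d3 > 0" "ball p d3 \<subseteq> S" using S p open_contains_ball by blast
  define d where "d = min d1 (min d2' d3)"
  have d: "d > 0" using d1 d2' d3 by (simp add: d_def)
  define s where "s = d / (2 * (norm v + norm w + 1))"
  have "0 < norm v + norm w + 1" by (intro add_nonneg_pos add_nonneg_nonneg norm_ge_zero) simp
  then have pos2: "0 < 2 * (norm v + norm w + 1)" by simp
  then have s: "s > 0" using d unfolding s_def by (rule divide_pos_pos[rotated])
  have small: "norm (a *\<^sub>R v + b *\<^sub>R w) < d" if "0 \<le> a" "a \<le> s" "0 \<le> b" "b \<le> s" for a b
  proof -
    have "norm (a *\<^sub>R v + b *\<^sub>R w) \<le> a * norm v + b * norm w"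
      using that norm_triangle_ineq[of "a *\<^sub>R v" "b *\<^sub>R w"] by simp
    also have "\<dots> \<le> s * norm v + s * norm w"
      using that by (intro add_mono mult_right_mono) auto
    also have "\<dots> = s * (norm v + norm w)" by (simp add: algebra_simps)
    also have "\<dots> < s * (2 * (norm v + norm w + 1))"
      using s norm_ge_zero[of v] norm_ge_zero[of w] by (intro mult_strict_left_mono) (smt (verit))+
    also have "\<dots> = d" using pos2 unfolding s_def by simp
    finally show ?thesis .
  qed
  have inS: "x \<in> S" and close: "dist x p < d" if "x = p + a *\<^sub>R v + b *\<^sub>R w" "0 \<le> a" "a \<le> s" "0 \<le> b" "b \<le> s" for x a b
  proof -
    have "dist x p < d" using small[OF that(2-5)] that(1) by (simp add: dist_norm algebra_simps)
    then show "dist x p < d" .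
    then show "x \<in> S" using d3(2) unfolding d_def by (auto simp: dist_commute)
  qed
  have inS': "p + b *\<^sub>R w + a *\<^sub>R v \<in> S" if "0 \<le> a" "a \<le> s" "0 \<le> b" "b \<le> s" for a b
    using inS[OF _ that] by (simp add: algebra_simps)
  obtain a1 b1 where ab1: "0 \<le> a1" "a1 \<le> s" "0 \<le> b1" "b1 \<le> s"
    "g (p + s *\<^sub>R v + s *\<^sub>R w) - g (p + s *\<^sub>R v) - g (p + s *\<^sub>R w) + g p
       = s\<^sup>2 * d2 g (p + a1 *\<^sub>R v + b1 *\<^sub>R w) v w"
    using mvt_step[OF S g s, of p v w] inS by blast
  obtain a2 b2 where ab2: "0 \<le> a2" "a2 \<le> s" "0 \<le> b2" "b2 \<le> s"
    "g (p + s *\<^sub>R w + s *\<^sub>R v) - g (p + s *\<^sub>R w) - g (p + s *\<^sub>R v) + g p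
       = s\<^sup>2 * d2 g (p + a2 *\<^sub>R w + b2 *\<^sub>R v) w v"
    using mvt_step[OF S g s, of p w v] inS' by blast
  have "s\<^sup>2 * d2 g (p + a1 *\<^sub>R v + b1 *\<^sub>R w) v w = s\<^sup>2 * d2 g (p + a2 *\<^sub>R w + b2 *\<^sub>R v) w v"
    using ab1(5) ab2(5) by (simp add: algebra_simps)
  then have eq: "d2 g (p + a1 *\<^sub>R v + b1 *\<^sub>R w) v w = d2 g (p + b2 *\<^sub>R v + a2 *\<^sub>R w) w v"
    using s by (simp add: algebra_simps)
  have x1: "dist (d2 g (p + a1 *\<^sub>R v + b1 *\<^sub>R w) v w) (d2 g p v w) < e"
    using d1(2)[OF inS[OF refl ab1(1-4)]] close[OF refl ab1(1-4)] by (simp add: d_def)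
  have x2: "dist (d2 g (p + b2 *\<^sub>R v + a2 *\<^sub>R w) w v) (d2 g p w v) < e"
    using d2'(2)[OF inS[OF refl ab2(3,4,1,2)]] close[OF refl ab2(3,4,1,2)] by (simp add: d_def)
  have "\<bar>d2 g p v w - d2 g p w v\<bar> < 2 * e"
    using x1 x2 eq unfolding dist_real_def by linarith
  then show False unfolding e_def by simp
qed

definition cp :: "real \<Rightarrow> real \<Rightarrow> complex" where
  "cp r x = of_real r * exp (2 * of_real pi * \<i> * of_real x)"

lemma circlepath0: "circlepath 0 r = cp r"
  by (simp add: circlepath cp_def fun_eq_iff)

lemma norm_cp: "r \<ge> 0 \<Longrightarrow> norm (cp r x) = r"
  by (simp add: cp_def norm_mult norm_exp_eq_Re)

lemma cp_nz: "r > 0 \<Longrightarrow> cp r x \<noteq> 0"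
  by (simp add: cp_def)

lemma continuous_on_cp[continuous_intros]: "continuous_on S g \<Longrightarrow> continuous_on S (\<lambda>x. cp r (g x))"
  unfolding cp_def by (intro continuous_intros)

lemma norm_axis: "norm (axis k (z::'a::real_normed_vector)) = norm z"
proof -
  have "norm (axis k z) = sqrt (\<Sum>i\<in>UNIV. (norm (axis k z $ i))\<^sup>2)" by (simp add: norm_vec_def L2_set_def)
  also have "(\<Sum>i\<in>UNIV. (norm (axis k z $ i))\<^sup>2) = (\<Sum>i\<in>UNIV. if i = k then (norm z)\<^sup>2 else 0)"
    by (rule sum.cong) (auto simp: axis_def)
  also have "\<dots> = (norm z)\<^sup>2" by simp
  finally show ?thesis by simp
qed

lemma axis_blin: "bounded_linear (axis k :: 'a::real_normed_vector \<Rightarrow> 'a^'m)"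
proof (rule bounded_linear_intro[where K=1])
  show "axis k (x + y) = axis k x + axis k y" for x y :: 'a by (auto simp: vec_eq_iff axis_def)
  show "axis k (r *\<^sub>R x) = r *\<^sub>R axis k x" for r and x :: 'a by (auto simp: vec_eq_iff axis_def)
  show "norm (axis k x) \<le> norm x * 1" for x :: 'a by (simp add: norm_axis)
qed

lemma continuous_on_axis[continuous_intros]:
  "continuous_on S (g :: _ \<Rightarrow> 'b::real_normed_vector) \<Longrightarrow> continuous_on S (\<lambda>x. (axis k (g x) :: 'b^'m))"
  using continuous_on_compose2[OF linear_continuous_on[OF axis_blin[where k=k]], of S g] by auto

lemma axis_smult: "axis k (t::complex) = t *s axis k 1"
  by (simp add: vec_eq_iff axis_def)

lemma Dexpand:
  fixes L :: "complex^'m \<Rightarrow> complex"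
  assumes "linear L" "\<And>c v. L (c *s v) = c * L v"
  shows "L v = (\<Sum>j\<in>UNIV. v $ j * L (axis j 1))"
proof -
  have "L v = L (\<Sum>j\<in>UNIV. (v $ j) *s axis j 1)" by (simp add: basis_expansion)
  also have "\<dots> = (\<Sum>j\<in>UNIV. L ((v $ j) *s axis j 1))" by (simp add: linear_sum[OF assms(1)])
  also have "\<dots> = (\<Sum>j\<in>UNIV. v $ j * L (axis j 1))" by (simp add: assms(2))
  finally show ?thesis .
qed

locale holo_scalar =
  fixes U :: "(complex^'m) set" and \<phi> :: "complex^'m \<Rightarrow> complex" and D\<phi> :: "complex^'m \<Rightarrow> complex^'m \<Rightarrow> complex"
  assumes U: "open U"
    and der: "\<And>q. q \<in> U \<Longrightarrow> (\<phi> has_derivative D\<phi> q) (at q)"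
    and cl: "\<And>q c v. q \<in> U \<Longrightarrow> D\<phi> q (c *s v) = c * D\<phi> q v"
begin

lemma lin: "q \<in> U \<Longrightarrow> linear (D\<phi> q)"
  using der has_derivative_linear by blast

lemma cont_phi: "continuous_on U \<phi>"
  using der has_derivative_continuous continuous_at_imp_continuous_on by blast

lemma expand: "q \<in> U \<Longrightarrow> D\<phi> q v = (\<Sum>j\<in>UNIV. v $ j * D\<phi> q (axis j 1))"
  by (rule Dexpand[OF lin cl])

lemma in_ball3:
  assumes "r > 0" "q \<in> ball p r" "norm t < 2 * r"
  shows "q + axis k t \<in> ball p (3 * r)"
proof -
  have "dist p (q + axis k t) \<le> dist p q + dist q (q + axis k t)" by (rule dist_triangle)
  also have "dist q (q + axis k t) = norm t" by (simp add: dist_norm norm_axis)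
  finally show ?thesis using assms by (simp add: dist_commute)
qed

lemma rep:
  assumes r: "r > 0" and sub: "ball p (3 * r) \<subseteq> U" and q: "q \<in> ball p r"
  shows "((\<lambda>x. inverse (cp r x) * \<phi> (q + axis k (cp r x))) has_integral D\<phi> q (axis k 1)) {0..1}"
proof -
  define g where "g = (\<lambda>t. \<phi> (q + axis k t))"
  have lin_ax: "((\<lambda>t. q + axis k t) has_derivative axis k) (at t)" for t :: complex
  proof -
    have "((\<lambda>t. q + axis k t) has_derivative (\<lambda>h. 0 + axis k h)) (at t)"
      by (rule has_derivative_add[OF has_derivative_const bounded_linear.has_derivative[OF axis_blin has_derivative_ident]])
    then show ?thesis by simp
  qed
  have gder: "(g has_field_derivative D\<phi> (q + axis k t) (axis k 1)) (at t)" if t: "t \<in> ball 0 (2 * r)" for t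
  proof -
    have inU: "q + axis k t \<in> U" using in_ball3[OF r q, of t k] t sub by auto
    have "(g has_derivative (\<lambda>h. D\<phi> (q + axis k t) (axis k h))) (at t)"
      unfolding g_def using has_derivative_compose[OF lin_ax der[OF inU]] .
    moreover have "(\<lambda>h. D\<phi> (q + axis k t) (axis k h)) = (*) (D\<phi> (q + axis k t) (axis k 1))"
    proof (rule ext)
      fix h :: complex
      have "axis k h = h *s (axis k 1 :: complex^'m)" by (rule axis_smult)
      then show "D\<phi> (q + axis k t) (axis k h) = D\<phi> (q + axis k t) (axis k 1) * h"
        by (simp add: cl[OF inU] mult.commute)
    qed
    ultimately show ?thesis by (simp add: has_field_derivative_def)
  qed
  have hol: "g holomorphic_on ball 0 (2 * r)"
    unfolding holomorphic_on_open[OF open_ball] using gder by blast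
  have s1: "cball 0 r \<subseteq> ball (0::complex) (2 * r)" using r by (auto simp: subset_eq)
  have s2: "ball 0 r \<subseteq> ball (0::complex) (2 * r)" using r by (auto simp: subset_eq)
  have contg: "continuous_on (cball 0 r) g"
    by (rule continuous_on_subset[OF holomorphic_on_imp_continuous_on[OF hol] s1])
  have holr: "g holomorphic_on ball 0 r"
    by (rule holomorphic_on_subset[OF hol s2])
  have z0: "(0::complex) \<in> ball 0 (2 * r)" "(0::complex) \<in> ball 0 r" using r by auto
  have ax0: "axis k (0::complex) = (0 :: complex^'m)" by (simp add: vec_eq_iff axis_def)
  have "deriv g 0 = D\<phi> (q + axis k 0) (axis k 1)"
    by (rule DERIV_imp_deriv[OF gder[OF z0(1)]])
  then have dg: "deriv g 0 = D\<phi> q (axis k 1)" by (simp only: ax0 add_0_right)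
  have ci0: "((\<lambda>u. g u / (u - 0) ^ Suc 1) has_contour_integral ((2 * pi * \<i>) / (fact 1) * (deriv ^^ 1) g 0))
      (circlepath 0 r)"
    by (rule Cauchy_has_contour_integral_higher_derivative_circlepath[OF contg holr z0(2)])
  have ci: "((\<lambda>u. g u / u ^ 2) has_contour_integral (2 * of_real pi * \<i> * D\<phi> q (axis k 1)))
      (circlepath 0 r)"
    using ci0 unfolding dg[symmetric] by (simp add: numeral_2_eq_2)
  have "((\<lambda>x. g (cp r x) / (cp r x) ^ 2 * vector_derivative (cp r) (at x within {0..1})) has_integral
      (2 * of_real pi * \<i> * D\<phi> q (axis k 1))) {0..1}"
    using ci unfolding has_contour_integral_def circlepath0 .
  then have "((\<lambda>x. (2 * of_real pi * \<i>) * (inverse (cp r x) * g (cp r x))) has_integral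
      (2 * of_real pi * \<i> * D\<phi> q (axis k 1))) {0..1}"
  proof (rule has_integral_eq[rotated])
    fix x :: real assume x: "x \<in> {0..1}"
    have "vector_derivative (cp r) (at x within {0..1}) = 2 * pi * \<i> * r * exp(2 * of_real pi * \<i> * x)"
      using vector_derivative_circlepath01[of x 0 r] x unfolding circlepath0 by simp
    also have "\<dots> = 2 * pi * \<i> * cp r x" by (simp add: cp_def)
    finally show "g (cp r x) / (cp r x) ^ 2 * vector_derivative (cp r) (at x within {0..1}) =
        (2 * of_real pi * \<i>) * (inverse (cp r x) * g (cp r x))"
      using cp_nz[OF r, of x] by (simp add: field_simps power2_eq_square)
  qed
  then have "((\<lambda>x. inverse (cp r x) * g (cp r x)) has_integral
      (2 * of_real pi * \<i> * D\<phi> q (axis k 1)) / (2 * of_real pi * \<i>)) {0..1}"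
    by (subst (asm) has_integral_mult_right_iff) auto
  then show ?thesis unfolding g_def by simp
qed

end

context holo_scalar
begin

lemma map_in:
  assumes r: "r > 0" and sub: "ball p (3 * r) \<subseteq> U" and q: "q \<in> ball p r"
  shows "q + axis k (cp r x) \<in> U"
  using in_ball3[OF r q, of "cp r x" k] sub norm_cp[of r x] r by auto

lemma cont_rep_fun:
  assumes r: "r > 0" and sub: "ball p (3 * r) \<subseteq> U"
  shows "continuous_on (ball p r \<times> cbox 0 1) (\<lambda>(q, x). inverse (cp r x) * \<phi> (q + axis k (cp r x)))"
proof -
  have c1: "continuous_on (ball p r \<times> cbox 0 1) (\<lambda>y::(complex^'m) \<times> real. fst y + axis k (cp r (snd y)))"
    by (intro continuous_intros)
  have c2: "continuous_on (ball p r \<times> cbox 0 1) (\<lambda>y::(complex^'m) \<times> real. \<phi> (fst y + axis k (cp r (snd y))))"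
    by (rule continuous_on_compose2[OF cont_phi c1]) (auto intro: map_in[OF r sub])
  have c3: "continuous_on (ball p r \<times> cbox 0 1) (\<lambda>y::(complex^'m) \<times> real. inverse (cp r (snd y)))"
    by (intro continuous_intros) (simp add: cp_nz[OF r])
  have "continuous_on (ball p r \<times> cbox 0 1) (\<lambda>y::(complex^'m) \<times> real. inverse (cp r (snd y)) * \<phi> (fst y + axis k (cp r (snd y))))"
    by (rule continuous_on_mult[OF c3 c2])
  then show ?thesis by (simp add: case_prod_beta')
qed

lemma small_ball:
  assumes "p \<in> U"
  obtains r where "r > 0" "ball p (3 * r) \<subseteq> U"
proof -
  obtain e where e: "e > 0" "ball p e \<subseteq> U" using U assms open_contains_ball by blast
  show ?thesis by (rule that[of "e / 3"]) (use e in auto)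
qed

lemma rep_int:
  assumes r: "r > 0" and sub: "ball p (3 * r) \<subseteq> U" and q: "q \<in> ball p r"
  shows "D\<phi> q (axis k 1) = integral (cbox 0 1) (\<lambda>x. inverse (cp r x) * \<phi> (q + axis k (cp r x)))"
  using integral_unique[OF rep[OF r sub q, of k]] by simp

lemma cont_partial: "continuous_on U (\<lambda>q. D\<phi> q (axis k 1))"
proof (rule continuous_at_imp_continuous_on, rule ballI)
  fix p assume p: "p \<in> U"
  obtain r where r: "r > 0" "ball p (3 * r) \<subseteq> U" using small_ball[OF p] by blast
  have "continuous_on (ball p r) (\<lambda>q. integral (cbox 0 1) (\<lambda>x. inverse (cp r x) * \<phi> (q + axis k (cp r x))))"
    by (rule integral_continuous_on_param[OF cont_rep_fun[OF r]])
  then have "continuous_on (ball p r) (\<lambda>q. D\<phi> q (axis k 1))"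
    by (rule continuous_on_cong[THEN iffD1, rotated 2]) (auto simp: rep_int[OF r])
  then have "\<forall>x\<in>ball p r. isCont (\<lambda>q. D\<phi> q (axis k 1)) x"
    using continuous_on_eq_continuous_at[OF open_ball] by blast
  then show "isCont (\<lambda>q. D\<phi> q (axis k 1)) p" using r(1) by simp
qed

lemma cont_D: "continuous_on U (\<lambda>q. D\<phi> q v)"
proof -
  have "continuous_on U (\<lambda>q. \<Sum>j\<in>UNIV. v $ j * D\<phi> q (axis j 1))"
    by (intro continuous_intros cont_partial)
  then show ?thesis
    by (rule continuous_on_cong[THEN iffD1, rotated 2]) (auto simp: expand)
qed

lemma partial_holo:
  assumes p: "p \<in> U"
  shows "\<exists>L. ((\<lambda>q. D\<phi> q (axis k 1)) has_derivative L) (at p) \<and> (\<forall>c w. L (c *s w) = c * L w)"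
proof -
  obtain r where r: "r > 0" "ball p (3 * r) \<subseteq> U" using small_ball[OF p] by blast
  define fq where "fq = (\<lambda>q x. inverse (cp r x) * \<phi> (q + axis k (cp r x)))"
  define fx where "fx = (\<lambda>q x. Blinfun (\<lambda>w. inverse (cp r x) * D\<phi> (q + axis k (cp r x)) w))"
  have blin: "bounded_linear (\<lambda>w. inverse (cp r x) * D\<phi> (q + axis k (cp r x)) w)" if "q \<in> ball p r" for q x
    using bounded_linear_compose[OF bounded_linear_mult_right has_derivative_bounded_linear[OF der[OF map_in[OF r that]]]]
    by simp
  have fxa: "blinfun_apply (fx q x) = (\<lambda>w. inverse (cp r x) * D\<phi> (q + axis k (cp r x)) w)" if "q \<in> ball p r" for q x
    unfolding fx_def using bounded_linear_Blinfun_apply[OF blin[OF that]] .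
  have tr: "((\<lambda>q. q + a) has_derivative (\<lambda>h. h)) (at q)" for a q :: "complex^'m"
  proof -
    have "((\<lambda>q. q + a) has_derivative (\<lambda>h. h + 0)) (at q)"
      by (rule has_derivative_add[OF has_derivative_ident has_derivative_const])
    then show ?thesis by simp
  qed
  have H1: "((\<lambda>q. fq q x) has_derivative blinfun_apply (fx q x)) (at q within ball p r)"
    if "q \<in> ball p r" "x \<in> cbox 0 1" for q x
    unfolding fxa[OF that(1)] fq_def
    by (rule has_derivative_at_withinI, rule has_derivative_mult_right,
        rule has_derivative_compose[OF tr der[OF map_in[OF r that(1)]]])
  have H2: "fq q integrable_on cbox 0 1" if "q \<in> ball p r" for q
    using has_integral_integrable[OF rep[OF r that, of k]] unfolding fq_def by simp
  have H3: "continuous_on (ball p r \<times> cbox 0 1) (\<lambda>(q, x). fx q x)"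
  proof (rule continuous_on_blinfun_componentwise)
    fix i :: "complex^'m" assume "i \<in> Basis"
    have c1: "continuous_on (ball p r \<times> cbox 0 1) (\<lambda>y::(complex^'m) \<times> real. fst y + axis k (cp r (snd y)))"
      by (intro continuous_intros)
    have c2: "continuous_on (ball p r \<times> cbox 0 1) (\<lambda>y::(complex^'m) \<times> real. D\<phi> (fst y + axis k (cp r (snd y))) i)"
      by (rule continuous_on_compose2[OF cont_D c1]) (auto intro: map_in[OF r])
    have c3: "continuous_on (ball p r \<times> cbox 0 1) (\<lambda>y::(complex^'m) \<times> real. inverse (cp r (snd y)))"
      by (intro continuous_intros) (simp add: cp_nz[OF r(1)])
    have "continuous_on (ball p r \<times> cbox 0 1) (\<lambda>y::(complex^'m) \<times> real. inverse (cp r (snd y)) * D\<phi> (fst y + axis k (cp r (snd y))) i)"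
      by (rule continuous_on_mult[OF c3 c2])
    then show "continuous_on (ball p r \<times> cbox 0 1) (\<lambda>y. blinfun_apply ((\<lambda>(q, x). fx q x) y) i)"
      by (rule continuous_on_cong[THEN iffD1, rotated 2]) (auto simp: fxa)
  qed
  have pin: "p \<in> ball p r" using r by simp
  have LR: "((\<lambda>q. integral (cbox 0 1) (fq q)) has_derivative blinfun_apply (integral (cbox 0 1) (fx p)))
      (at p within ball p r)"
    by (rule leibniz_rule[OF H1 H2 H3 pin convex_ball])
  then have LR': "((\<lambda>q. integral (cbox 0 1) (fq q)) has_derivative blinfun_apply (integral (cbox 0 1) (fx p))) (at p)"
    using at_within_open[OF pin open_ball] by simp
  have "((\<lambda>q. D\<phi> q (axis k 1)) has_derivative blinfun_apply (integral (cbox 0 1) (fx p))) (at p)"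
    by (rule has_derivative_transform_within_open[OF LR' open_ball pin])
       (simp add: rep_int[OF r] fq_def)
  moreover have "blinfun_apply (integral (cbox 0 1) (fx p)) (c *s w) = c * blinfun_apply (integral (cbox 0 1) (fx p)) w"
    for c w
  proof -
    have cfx: "continuous_on (cbox 0 1) (fx p)"
    proof -
      have a: "continuous_on (cbox 0 1) (\<lambda>x::real. (p, x))" by (intro continuous_intros)
      have b: "(\<lambda>x::real. (p, x)) ` cbox 0 1 \<subseteq> ball p r \<times> cbox 0 1" using pin by auto
      show ?thesis using continuous_on_compose2[OF H3 a b] by simp
    qed
    have int: "fx p integrable_on cbox 0 1" by (rule integrable_continuous[OF cfx])
    have e1: "blinfun_apply (integral (cbox 0 1) (fx p)) v =
        integral (cbox 0 1) (\<lambda>x. inverse (cp r x) * D\<phi> (p + axis k (cp r x)) v)" for v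
      using blinfun_apply_integral[OF int, of v] by (simp add: fxa[OF pin])
    have c1: "continuous_on (cbox 0 1) (\<lambda>x::real. p + axis k (cp r x))"
      by (intro continuous_intros)
    have c2: "continuous_on (cbox 0 1) (\<lambda>x::real. D\<phi> (p + axis k (cp r x)) w)"
      by (rule continuous_on_compose2[OF cont_D c1]) (auto intro: map_in[OF r pin])
    have c3: "continuous_on (cbox 0 1) (\<lambda>x::real. inverse (cp r x))"
      by (intro continuous_intros) (simp add: cp_nz[OF r(1)])
    have i2: "(\<lambda>x. inverse (cp r x) * D\<phi> (p + axis k (cp r x)) w) integrable_on cbox 0 1"
      by (rule integrable_continuous[OF continuous_on_mult[OF c3 c2]])
    have "integral (cbox 0 1) (\<lambda>x. inverse (cp r x) * D\<phi> (p + axis k (cp r x)) (c *s w)) =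
          integral (cbox 0 1) (\<lambda>x. c * (inverse (cp r x) * D\<phi> (p + axis k (cp r x)) w))"
      by (rule integral_cong) (simp add: cl[OF map_in[OF r pin]])
    also have "\<dots> = c * integral (cbox 0 1) (\<lambda>x. inverse (cp r x) * D\<phi> (p + axis k (cp r x)) w)"
      using integral_unique[OF has_integral_mult_right[OF integrable_integral[OF i2]]] by simp
    finally show ?thesis using e1[of "c *s w"] e1[of w] by simp
  qed
  ultimately show ?thesis by blast
qed

end

lemma (in holo_scalar) holo_D:
  assumes p: "p \<in> U"
  shows "\<exists>L. ((\<lambda>q. D\<phi> q v) has_derivative L) (at p) \<and> (\<forall>c w. L (c *s w) = c * L w)"
proof -
  have "\<forall>k. \<exists>L. ((\<lambda>q. D\<phi> q (axis k 1)) has_derivative L) (at p) \<and> (\<forall>c w. L (c *s w) = c * L w)"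
    using partial_holo[OF p] by blast
  from choice[OF this] obtain Lf where Lf0: "\<forall>k. ((\<lambda>q. D\<phi> q (axis k 1)) has_derivative Lf k) (at p)
     \<and> (\<forall>c w. Lf k (c *s w) = c * Lf k w)" by blast
  have Lf: "\<And>k. ((\<lambda>q. D\<phi> q (axis k 1)) has_derivative Lf k) (at p)"
    "\<And>k c w. Lf k (c *s w) = c * Lf k w" using Lf0 by blast+
  have "((\<lambda>q. \<Sum>j\<in>UNIV. v $ j * D\<phi> q (axis j 1)) has_derivative (\<lambda>w. \<Sum>j\<in>UNIV. v $ j * Lf j w)) (at p)"
    by (intro has_derivative_sum has_derivative_mult_right Lf)
  then have "((\<lambda>q. D\<phi> q v) has_derivative (\<lambda>w. \<Sum>j\<in>UNIV. v $ j * Lf j w)) (at p)"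
    by (rule has_derivative_transform_within_open[OF _ U p]) (rule sym, erule expand)
  moreover have "(\<Sum>j\<in>UNIV. v $ j * Lf j (c *s w)) = c * (\<Sum>j\<in>UNIV. v $ j * Lf j w)" for c w
    by (simp add: Lf(2) sum_distrib_left mult.left_commute)
  ultimately show ?thesis by blast
qed

lemma vec_has_derivative:
  fixes X :: "'a::real_normed_vector \<Rightarrow> 'b::euclidean_space ^'n"
  assumes "\<And>i. ((\<lambda>q. X q $ i) has_derivative L i) (at z)"
  shows "(X has_derivative (\<lambda>w. \<chi> i. L i w)) (at z)"
proof -
  have "\<forall>b\<in>Basis. ((\<lambda>q. X q \<bullet> b) has_derivative (\<lambda>w. (\<chi> i. L i w) \<bullet> b)) (at z within UNIV)"
  proof
    fix b :: "'b^'n" assume "b \<in> Basis"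
    then obtain i u where b: "b = axis i u" "u \<in> Basis" unfolding Basis_vec_def by blast
    have "((\<lambda>q. X q $ i \<bullet> u) has_derivative (\<lambda>w. L i w \<bullet> u)) (at z)"
      by (rule bounded_linear.has_derivative[OF bounded_linear_inner_left assms])
    then show "((\<lambda>q. X q \<bullet> b) has_derivative (\<lambda>w. (\<chi> i. L i w) \<bullet> b)) (at z within UNIV)"
      by (simp add: b inner_axis)
  qed
  then show ?thesis using has_derivative_componentwise_within[of X _ z UNIV] by simp
qed

lemma holo_vec:
  fixes f :: "complex^'m \<Rightarrow> complex^'n"
  assumes U: "open U" and hol: "holo_on U f" and p: "p \<in> U"
  shows "\<exists>L. ((\<lambda>q. frechet_derivative f (at q) v) has_derivative L) (at p) \<and> (\<forall>c w. L (c *s w) = c *s L w)"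
proof -
  have fd: "(f has_derivative frechet_derivative f (at q)) (at q)"
    and fcl: "frechet_derivative f (at q) (c *s w) = c *s frechet_derivative f (at q) w" if "q \<in> U" for q c w
  proof -
    have ex: "\<exists>L. (f has_derivative L) (at q) \<and> (\<forall>c v. L (c *s v) = c *s L v)"
      using hol that unfolding holo_on_def by (rule bspec)
    then obtain L where L1: "(f has_derivative L) (at q)" and L2: "\<forall>c v. L (c *s v) = c *s L v"
      by (elim exE conjE)
    have L: "(f has_derivative L) (at q)" "\<And>c v. L (c *s v) = c *s L v" using L1 L2 by simp_all
    have e: "frechet_derivative f (at q) = L" by (rule frechet_derivative_at[OF L(1), symmetric])
    show "(f has_derivative frechet_derivative f (at q)) (at q)" unfolding e by (rule L(1))
    show "frechet_derivative f (at q) (c *s w) = c *s frechet_derivative f (at q) w" unfolding e by (rule L(2))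
  qed
  have "\<forall>i. \<exists>L. ((\<lambda>q. frechet_derivative f (at q) v $ i) has_derivative L) (at p) \<and> (\<forall>c w. L (c *s w) = c * L w)"
  proof
    fix i
    interpret hs: holo_scalar U "\<lambda>q. f q $ i" "\<lambda>q v. frechet_derivative f (at q) v $ i"
    proof
      show "open U" by (rule U)
      show "((\<lambda>q. f q $ i) has_derivative (\<lambda>v. frechet_derivative f (at q) v $ i)) (at q)" if "q \<in> U" for q
        by (rule bounded_linear.has_derivative[OF bounded_linear_vec_nth fd[OF that]])
      show "frechet_derivative f (at q) (c *s v) $ i = c * frechet_derivative f (at q) v $ i" if "q \<in> U" for q c v
        by (simp add: fcl[OF that])
    qed
    show "\<exists>L. ((\<lambda>q. frechet_derivative f (at q) v $ i) has_derivative L) (at p) \<and> (\<forall>c w. L (c *s w) = c * L w)"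
      by (rule hs.holo_D[OF p])
  qed
  from choice[OF this] obtain Lf where Lf0: "\<forall>i. ((\<lambda>q. frechet_derivative f (at q) v $ i) has_derivative Lf i) (at p)
     \<and> (\<forall>c w. Lf i (c *s w) = c * Lf i w)" by blast
  have Lf: "\<And>i. ((\<lambda>q. frechet_derivative f (at q) v $ i) has_derivative Lf i) (at p)"
    "\<And>i c w. Lf i (c *s w) = c * Lf i w" using Lf0 by blast+
  have "((\<lambda>q. frechet_derivative f (at q) v) has_derivative (\<lambda>w. \<chi> i. Lf i w)) (at p)"
    by (rule vec_has_derivative[OF Lf(1)])
  moreover have "(\<chi> i. Lf i (c *s w)) = c *s (\<chi> i. Lf i w)" for c w
    by (simp add: vec_eq_iff Lf(2))
  ultimately show ?thesis by blast
qed

lemma lin_expand: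
  fixes L :: "'a::euclidean_space \<Rightarrow> real"
  assumes "linear L"
  shows "L x = (\<Sum>b\<in>Basis. (x \<bullet> b) * L b)"
proof -
  have "L x = L (\<Sum>b\<in>Basis. (x \<bullet> b) *\<^sub>R b)" by (simp add: euclidean_representation)
  also have "\<dots> = (\<Sum>b\<in>Basis. L ((x \<bullet> b) *\<^sub>R b))" by (simp add: linear_sum[OF assms] comp_def)
  also have "\<dots> = (\<Sum>b\<in>Basis. (x \<bullet> b) * L b)" by (simp add: linear_scale[OF assms])
  finally show ?thesis .
qed

lemma chain2:
  fixes F :: "(complex^'m) \<times> (complex^'n) \<Rightarrow> real" and f :: "complex^'m \<Rightarrow> complex^'n"
  assumes S: "open S" and F: "Ck 2 S F" and U: "open U" and z: "z \<in> U"
    and inS: "\<And>q. q \<in> U \<Longrightarrow> (q, f q) \<in> S"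
    and fder: "\<And>q. q \<in> U \<Longrightarrow> (f has_derivative Df q) (at q)"
    and f2: "((\<lambda>q. Df q v) has_derivative D2) (at z)"
  shows "d2 (\<lambda>q. F (q, f q)) z v w =
     d2 F (z, f z) (v, Df z v) (w, Df z w) + frechet_derivative F (at (z, f z)) (0, D2 w)"
proof -
  define DF where "DF = (\<lambda>p. frechet_derivative F (at p))"
  define h where "h = (\<lambda>q. F (q, f q))"
  have g: "((\<lambda>q. (q, f q)) has_derivative (\<lambda>v. (v, Df q v))) (at q)" if "q \<in> U" for q
    by (rule has_derivative_Pair[OF has_derivative_ident fder[OF that]])
  have hder: "(h has_derivative (\<lambda>v. DF (q, f q) (v, Df q v))) (at q)" if "q \<in> U" for q
    unfolding h_def DF_def using has_derivative_compose[OF g[OF that] C2_has1[OF F inS[OF that]]] .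
  define K where "K = (\<lambda>q. \<Sum>b\<in>Basis. ((v, Df q v) \<bullet> b) * DF (q, f q) b)"
  have Keq: "frechet_derivative h (at q) v = K q" if "q \<in> U" for q
  proof -
    have "frechet_derivative h (at q) v = DF (q, f q) (v, Df q v)"
      using frechet_derivative_at[OF hder[OF that]] by metis
    also have "\<dots> = K q"
      unfolding K_def DF_def by (rule lin_expand[OF C2_lin1[OF F inS[OF that]]])
    finally show ?thesis .
  qed
  have a: "((\<lambda>q. (v, Df q v) \<bullet> b) has_derivative (\<lambda>w. (0, D2 w) \<bullet> b)) (at z)" for b
    by (rule bounded_linear.has_derivative[OF bounded_linear_inner_left has_derivative_Pair[OF has_derivative_const f2]])
  have c: "((\<lambda>q. DF (q, f q) b) has_derivative (\<lambda>w. d2 F (z, f z) b (w, Df z w))) (at z)" for b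
    unfolding DF_def using has_derivative_compose[OF g[OF z] C2_has2[OF F inS[OF z]]] .
  define Kd where "Kd = (\<lambda>w. \<Sum>b\<in>Basis. ((v, Df z v) \<bullet> b) * d2 F (z, f z) b (w, Df z w) + ((0, D2 w) \<bullet> b) * DF (z, f z) b)"
  have "(K has_derivative Kd) (at z)"
    unfolding K_def Kd_def
    by (intro has_derivative_sum has_derivative_mult a c)
  then have "((\<lambda>q. frechet_derivative h (at q) v) has_derivative Kd) (at z)"
    by (rule has_derivative_transform_within_open[OF _ U z]) (simp add: Keq)
  then have "d2 h z v w = Kd w"
    unfolding d2_def using frechet_derivative_at by metis
  also have "Kd w = (\<Sum>b\<in>Basis. ((v, Df z v) \<bullet> b) * d2 F (z, f z) b (w, Df z w)) + (\<Sum>b\<in>Basis. ((0, D2 w) \<bullet> b) * DF (z, f z) b)"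
    unfolding Kd_def by (rule sum.distrib)
  also have "(\<Sum>b\<in>Basis. ((v, Df z v) \<bullet> b) * d2 F (z, f z) b (w, Df z w)) = d2 F (z, f z) (v, Df z v) (w, Df z w)"
    by (rule lin_expand[OF d2_linear_v[OF S F inS[OF z]], symmetric])
  also have "(\<Sum>b\<in>Basis. ((0, D2 w) \<bullet> b) * DF (z, f z) b) = DF (z, f z) (0, D2 w)"
    unfolding DF_def by (rule lin_expand[OF C2_lin1[OF F inS[OF z]], symmetric])
  finally show ?thesis unfolding h_def DF_def .
qed

lemma sum_option: "(\<Sum>a\<in>(UNIV :: 'n::finite option set). g a) = g None + (\<Sum>m\<in>UNIV. g (Some m))"
proof -
  have "(UNIV :: 'n option set) = insert None (range Some)" by (rule UNIV_option_conv)
  then have "(\<Sum>a\<in>(UNIV :: 'n option set). g a) = (\<Sum>a\<in>insert None (range Some). g a)" by simp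
  also have "\<dots> = g None + (\<Sum>a\<in>range Some. g a)" by (subst sum.insert) auto
  also have "(\<Sum>a\<in>range Some. g a) = (\<Sum>m\<in>UNIV. g (Some m))" by (subst sum.reindex) auto
  finally show ?thesis .
qed

lemma prod_option: "(\<Prod>a\<in>(UNIV :: 'n::finite option set). g a) = g None * (\<Prod>m\<in>UNIV. g (Some m))"
proof -
  have "(UNIV :: 'n option set) = insert None (range Some)" by (rule UNIV_option_conv)
  then have "(\<Prod>a\<in>(UNIV :: 'n option set). g a) = (\<Prod>a\<in>insert None (range Some). g a)" by simp
  also have "\<dots> = g None * (\<Prod>a\<in>range Some. g a)" by (subst prod.insert) auto
  also have "(\<Prod>a\<in>range Some. g a) = (\<Prod>m\<in>UNIV. g (Some m))" by (subst prod.reindex) auto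
  finally show ?thesis .
qed

lemma map_option_permutes:
  assumes "s permutes (UNIV :: 'n set)"
  shows "map_option s permutes (UNIV :: 'n option set)"
proof -
  have b: "bij s" using assms permutes_bij by blast
  have "bij (map_option s)"
  proof (rule bij_betw_byWitness[where f' = "map_option (inv s)"])
    show "\<forall>a\<in>UNIV. map_option (inv s) (map_option s a) = a"
      using b by (simp add: option.map_comp inv_o_cancel[OF bij_is_inj[OF b]] option.map_id)
    show "\<forall>a'\<in>UNIV. map_option s (map_option (inv s) a') = a'"
      using b by (simp add: option.map_comp surj_iff[THEN iffD1, OF bij_is_surj[OF b]] option.map_id)
  qed auto
  then show ?thesis by (rule bij_imp_permutes) simp
qed

lemma map_option_eq_map_permutation:
  "map_option s = map_permutation UNIV Some s"
proof
  fix y :: "'a option"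
  show "map_option s y = map_permutation UNIV Some s y"
  proof (cases y)
    case None
    then show ?thesis unfolding map_permutation_def by (simp add: restrict_id_def)
  next
    case (Some m)
    then show ?thesis unfolding map_permutation_def by (simp add: restrict_id_def)
  qed
qed

lemma sign_map_option:
  assumes "s permutes (UNIV :: 'n::finite set)"
  shows "sign (map_option s) = sign s"
  unfolding map_option_eq_map_permutation
  by (rule sign_map_permutation) (use assms in auto)

lemma det_block:
  fixes A :: "'a::comm_ring_1^('n::finite option)^('n option)"
  assumes z: "\<And>b. b \<noteq> None \<Longrightarrow> A $ None $ b = 0"
  shows "det A = A $ None $ None * det (\<chi> m l. A $ Some m $ Some l)"
proof -
  let ?P' = "{p. p permutes (UNIV :: 'n option set)}"
  let ?S = "{p. p permutes (UNIV :: 'n option set) \<and> p None = None}"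
  let ?P = "{s. s permutes (UNIV :: 'n set)}"
  let ?t = "\<lambda>p. of_int (sign p) * (\<Prod>i\<in>UNIV. A $ i $ p i)"
  have "det A = sum ?t ?P'" unfolding det_def by simp
  also have "\<dots> = sum ?t ?S"
  proof (rule sum.mono_neutral_right)
    show "finite ?P'" by (simp add: finite_permutations)
    show "?S \<subseteq> ?P'" by auto
    show "\<forall>p\<in>?P' - ?S. ?t p = 0"
    proof
      fix p assume "p \<in> ?P' - ?S"
      then have "p None \<noteq> None" by auto
      then have "A $ None $ p None = 0" by (rule z)
      then show "?t p = 0" by (simp add: prod_option)
    qed
  qed
  also have "\<dots> = sum (\<lambda>s. ?t (map_option s)) ?P"
  proof (rule sum.reindex_bij_betw[symmetric])
    show "bij_betw map_option ?P ?S"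
    proof (rule bij_betw_byWitness[where f' = "\<lambda>p m. the (p (Some m))"])
      show "\<forall>s\<in>?P. (\<lambda>m. the (map_option s (Some m))) = s" by auto
      show "\<forall>p\<in>?S. map_option (\<lambda>m. the (p (Some m))) = p"
      proof
        fix p assume p: "p \<in> ?S"
        have inj: "inj p" using p permutes_inj by auto
        have ns: "p (Some m) \<noteq> None" for m
          using p inj_eq[OF inj, of "Some m" None] by auto
        show "map_option (\<lambda>m. the (p (Some m))) = p"
        proof
          fix y show "map_option (\<lambda>m. the (p (Some m))) y = p y"
            using p ns by (cases y) auto
        qed
      qed
      show "map_option ` ?P \<subseteq> ?S" using map_option_permutes by auto
      show "(\<lambda>p m. the (p (Some m))) ` ?S \<subseteq> ?P"
      proof
        fix s assume "s \<in> (\<lambda>p m. the (p (Some m))) ` ?S"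
        then obtain p where p: "p \<in> ?S" and s: "s = (\<lambda>m. the (p (Some m)))" by blast
        have inj: "inj p" using p permutes_inj by auto
        have sur: "surj p" using p permutes_surj by auto
        have ns: "p (Some m) \<noteq> None" for m
          using p inj_eq[OF inj, of "Some m" None] by auto
        then have ps: "p (Some m) = Some (s m)" for m using s by auto
        have "bij s"
        proof (rule bijI)
          show "inj s"
          proof
            fix x y assume "s x = s y"
            then have "p (Some x) = p (Some y)" using ps by simp
            then show "x = y" using inj by (auto dest: injD)
          qed
          show "surj s"
          proof -
            have "y \<in> range s" for y
            proof -
              obtain x where x: "p x = Some y" using sur by (metis surjD)
              have pN: "p None = None" using p by simp
              have "x \<noteq> None"
              proof
                assume "x = None" then show False using x pN by simp
              qed
              then obtain m where "x = Some m" by auto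
              then show ?thesis using x ps by (metis option.inject rangeI)
            qed
            then show ?thesis by auto
          qed
        qed
        then have "s permutes UNIV" by (rule bij_imp_permutes) simp
        then show "s \<in> ?P" by simp
      qed
    qed
  qed
  also have "\<dots> = A $ None $ None * det (\<chi> m l. A $ Some m $ Some l)"
    unfolding det_def sum_distrib_left
  proof (rule sum.cong[OF refl])
    fix s assume s: "s \<in> ?P"
    show "?t (map_option s) = A $ None $ None * (of_int (sign s) * (\<Prod>i\<in>UNIV. (\<chi> m l. A $ Some m $ Some l) $ i $ s i))"
      using sign_map_option[of s] s by (simp add: prod_option algebra_simps)
  qed
  finally show ?thesis .
qed

lemma det_schur:
  fixes H :: "'a::field^('n::finite option)^('n option)" and c :: "'a^'n"
  assumes eq: "\<And>l. (\<Sum>m\<in>UNIV. c $ m * H $ Some m $ Some l) = - H $ None $ Some l"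
  shows "det H = (H $ None $ None + (\<Sum>m\<in>UNIV. c $ m * H $ Some m $ None)) * det (\<chi> m l. H $ Some m $ Some l)"
proof -
  define Sr where "Sr = (\<Sum>m\<in>UNIV. c $ m *s row (Some m) H)"
  define H' where "H' = (\<chi> a. if a = None then row None H + Sr else row a H)"
  have d1: "det H' = det (\<chi> a. if a = None then row None H else row a H) + det (\<chi> a. if a = None then Sr else row a H)"
    unfolding H'_def by (rule det_row_add)
  have d2: "(\<chi> a. if a = None then row None H else row a H) = H" by (simp add: vec_eq_iff row_def)
  have "det (\<chi> a. if a = None then Sr else row a H) =
        (\<Sum>m\<in>UNIV. det (\<chi> a. if a = None then c $ m *s row (Some m) H else row a H))"
    unfolding Sr_def by (rule det_linear_row_sum) simp
  also have "\<dots> = (\<Sum>m\<in>UNIV. c $ m * det (\<chi> a. if a = None then row (Some m) H else row a H))"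
    by (simp add: det_row_mul)
  also have "\<dots> = 0"
  proof (rule sum.neutral, rule ballI)
    fix m
    have "det (\<chi> a. if a = None then row (Some m) H else row a H) = 0"
      by (rule det_identical_rows[of None "Some m"]) (auto simp: row_def vec_eq_iff)
    then show "c $ m * det (\<chi> a. if a = None then row (Some m) H else row a H) = 0" by simp
  qed
  finally have d3: "det (\<chi> a. if a = None then Sr else row a H) = 0" .
  have dH: "det H' = det H" using d1 d2 d3 by simp
  have H'N: "H' $ None $ b = H $ None $ b + (\<Sum>m\<in>UNIV. c $ m * H $ Some m $ b)" for b
    by (simp add: H'_def Sr_def row_def sum_component)
  have H'S: "H' $ Some m $ b = H $ Some m $ b" for m b
    by (simp add: H'_def row_def)
  have "det H' = H' $ None $ None * det (\<chi> m l. H' $ Some m $ Some l)"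
  proof (rule det_block)
    fix b :: "'n option" assume "b \<noteq> None"
    then obtain l where "b = Some l" by auto
    then show "H' $ None $ b = 0" using eq[of l] by (simp add: H'N)
  qed
  then show ?thesis using dH by (simp add: H'N H'S)
qed

lemma pos_det:
  fixes M :: "complex^'n^'n"
  assumes "pos_herm M"
  shows "det M \<noteq> 0"
proof
  assume "det M = 0"
  then have "det (transpose M) = 0" by simp
  then have "\<not> invertible (transpose M)" using invertible_det_nz by blast
  then have "\<not> (\<exists>B. B ** transpose M = mat 1)" using invertible_left_inverse by blast
  then obtain x where x: "transpose M *v x = 0" "x \<noteq> 0" using matrix_left_invertible_ker by blast
  have "(\<Sum>m\<in>UNIV. \<Sum>l\<in>UNIV. M $ m $ l * x $ m * cnj (x $ l)) = (\<Sum>l\<in>UNIV. cnj (x $ l) * (transpose M *v x) $ l)"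
    by (subst sum.swap) (simp add: matrix_vector_mult_def transpose_def sum_distrib_left algebra_simps)
  also have "\<dots> = 0" using x(1) by simp
  finally show False using assms x(2) unfolding pos_herm_def by fastforce
qed

lemma solve_lin:
  fixes M :: "'a::field^'n^'n"
  assumes "det M \<noteq> 0"
  shows "\<exists>c. \<forall>l. (\<Sum>m\<in>UNIV. c $ m * M $ m $ l) = r $ l"
proof -
  have "invertible (transpose M)" using assms by (simp add: invertible_det_nz)
  then obtain B where B: "transpose M ** B = mat 1" using invertible_right_inverse by blast
  have "transpose M *v (B *v r) = r" by (simp add: matrix_vector_mul_assoc B)
  then have "\<forall>l. (\<Sum>m\<in>UNIV. (B *v r) $ m * M $ m $ l) = r $ l"
    by (simp add: vec_eq_iff matrix_vector_mult_def transpose_def mult.commute)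
  then show ?thesis by blast
qed

definition optc :: "'a::one^'n \<Rightarrow> 'n option \<Rightarrow> 'a" where
  "optc c a = (case a of None \<Rightarrow> 1 | Some m \<Rightarrow> c $ m)"

definition qf :: "complex^('n::finite option)^('n option) \<Rightarrow> complex^'n \<Rightarrow> complex" where
  "qf H c = (\<Sum>a\<in>UNIV. \<Sum>b\<in>UNIV. optc c a * cnj (optc c b) * H $ a $ b)"

lemma qexp:
  "qf H c = H $ None $ None + (\<Sum>l\<in>UNIV. cnj (c $ l) * H $ None $ Some l)
     + (\<Sum>m\<in>UNIV. c $ m * H $ Some m $ None) + (\<Sum>m\<in>UNIV. \<Sum>l\<in>UNIV. c $ m * cnj (c $ l) * H $ Some m $ Some l)"
  by (simp add: qf_def sum_option optc_def sum.distrib algebra_simps)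

lemma minq:
  fixes H :: "complex^('n::finite option)^('n option)" and c0 c :: "complex^'n"
  assumes herm: "\<And>a b. H $ b $ a = cnj (H $ a $ b)"
    and pos: "pos_herm (\<chi> m l. H $ Some m $ Some l)"
    and eq: "\<And>l. (\<Sum>m\<in>UNIV. c0 $ m * H $ Some m $ Some l) = - H $ None $ Some l"
  shows "qf H c0 = H $ None $ None + (\<Sum>m\<in>UNIV. c0 $ m * H $ Some m $ None)"
    and "Re (qf H c0) \<le> Re (qf H c)"
proof -
  define A where "A = (\<lambda>e::complex^'n. \<Sum>l\<in>UNIV. cnj (e $ l) * H $ None $ Some l)"
  define B where "B = (\<lambda>e::complex^'n. \<Sum>m\<in>UNIV. e $ m * H $ Some m $ None)"
  define Q where "Q = (\<lambda>e f::complex^'n. \<Sum>m\<in>UNIV. \<Sum>l\<in>UNIV. e $ m * cnj (f $ l) * H $ Some m $ Some l)"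
  have q: "qf H e = H $ None $ None + A e + B e + Q e e" for e
    unfolding A_def B_def Q_def by (rule qexp)
  have Q1: "Q c0 e = - A e" for e
  proof -
    have "Q c0 e = (\<Sum>l\<in>UNIV. cnj (e $ l) * (\<Sum>m\<in>UNIV. c0 $ m * H $ Some m $ Some l))"
      unfolding Q_def by (subst sum.swap) (simp add: sum_distrib_left algebra_simps)
    also have "\<dots> = - A e" by (simp add: eq A_def sum_negf)
    finally show ?thesis .
  qed
  have BA: "B e = cnj (A e)" for e
    unfolding A_def B_def by (simp add: herm[symmetric])
  have Q2: "Q e c0 = cnj (Q c0 e)" for e
  proof -
    have "cnj (Q c0 e) = (\<Sum>m\<in>UNIV. \<Sum>l\<in>UNIV. cnj (c0 $ m) * e $ l * H $ Some l $ Some m)"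
      unfolding Q_def by (simp add: herm[symmetric])
    also have "\<dots> = (\<Sum>l\<in>UNIV. \<Sum>m\<in>UNIV. cnj (c0 $ m) * e $ l * H $ Some l $ Some m)"
      by (rule sum.swap)
    also have "\<dots> = Q e c0" unfolding Q_def by (simp add: algebra_simps)
    finally show ?thesis by simp
  qed
  have Q3: "Q e c0 = - B e" for e using Q1 Q2 BA by simp
  show "qf H c0 = H $ None $ None + (\<Sum>m\<in>UNIV. c0 $ m * H $ Some m $ None)"
    using q[of c0] Q1[of c0] unfolding B_def by simp
  define d where "d = c - c0"
  have cd: "c = c0 + d" by (simp add: d_def)
  have Aadd: "A (c0 + d) = A c0 + A d" unfolding A_def by (simp add: sum.distrib algebra_simps)
  have Badd: "B (c0 + d) = B c0 + B d" unfolding B_def by (simp add: sum.distrib algebra_simps)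
  have Qadd: "Q (c0 + d) (c0 + d) = Q c0 c0 + Q c0 d + Q d c0 + Q d d"
    unfolding Q_def by (simp add: sum.distrib algebra_simps)
  have qc: "qf H c = qf H c0 + Q d d"
    unfolding cd q Aadd Badd Qadd Q1 Q3 by simp
  have "Re (Q d d) \<ge> 0"
  proof (cases "d = 0")
    case True then show ?thesis by (simp add: Q_def)
  next
    case False
    then have "0 < Re (\<Sum>m\<in>UNIV. \<Sum>l\<in>UNIV. (\<chi> m l. H $ Some m $ Some l) $ m $ l * d $ m * cnj (d $ l))"
      using pos unfolding pos_herm_def by blast
    then show ?thesis unfolding Q_def by (simp add: algebra_simps)
  qed
  then show "Re (qf H c0) \<le> Re (qf H c)" using qc by simp
qed

definition Wf :: "('v \<Rightarrow> 'v \<Rightarrow> real) \<Rightarrow> 'v \<Rightarrow> 'v \<Rightarrow> 'v \<Rightarrow> 'v \<Rightarrow> complex" where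
  "Wf B r1 i1 r2 i2 = complex_of_real ((B r1 r2 + B i1 i2) / 4) + \<i> * complex_of_real ((B r1 i2 - B i1 r2) / 4)"

lemma wirt_Wf: "wirt g p ea ia eb ib = Wf (d2 g p) ea ia eb ib"
  by (simp add: wirt_def Wf_def)

lemma bil:
  fixes B :: "'v::real_vector \<Rightarrow> 'v \<Rightarrow> real"
  assumes l1: "\<And>y. linear (\<lambda>x. B x y)" and l2: "\<And>x. linear (B x)"
  shows "B (a *\<^sub>R r + b *\<^sub>R i) (c *\<^sub>R r' + d *\<^sub>R i') =
    a * c * B r r' + a * d * B r i' + b * c * B i r' + b * d * B i i'"
  using linear_add[OF l1] linear_scale[OF l1] linear_add[OF l2] linear_scale[OF l2]
  by (simp add: algebra_simps)

lemma bexp: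
  fixes B :: "'v::real_vector \<Rightarrow> 'v \<Rightarrow> real"
  assumes l1: "\<And>y. linear (\<lambda>x. B x y)" and l2: "\<And>x. linear (B x)"
  shows "B (x1 + x2) y = B x1 y + B x2 y" "B (x1 - x2) y = B x1 y - B x2 y"
    "B (c *\<^sub>R x) y = c * B x y" "B (- x) y = - B x y"
    "B x (y1 + y2) = B x y1 + B x y2" "B x (y1 - y2) = B x y1 - B x y2"
    "B x (c *\<^sub>R y) = c * B x y" "B x (- y) = - B x y"
  using linear_add[OF l1] linear_diff[OF l1] linear_scale[OF l1] linear_neg[OF l1]
    linear_add[OF l2] linear_diff[OF l2] linear_scale[OF l2] linear_neg[OF l2]
  by auto

lemma bsum:
  fixes B :: "'v::real_vector \<Rightarrow> 'v \<Rightarrow> real"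
  assumes l1: "\<And>y. linear (\<lambda>x. B x y)" and l2: "\<And>x. linear (B x)"
  shows "B (sum U A) (sum V A) = (\<Sum>a\<in>A. \<Sum>b\<in>A. B (U a) (V b))"
proof -
  have "B (sum U A) (sum V A) = (\<Sum>a\<in>A. B (U a) (sum V A))"
    using linear_sum[OF l1[of "sum V A"], of U A] by (simp add: comp_def)
  also have "\<dots> = (\<Sum>a\<in>A. \<Sum>b\<in>A. B (U a) (V b))"
  proof (rule sum.cong[OF refl])
    fix a show "B (U a) (sum V A) = (\<Sum>b\<in>A. B (U a) (V b))"
      using linear_sum[OF l2[of "U a"], of V A] by (simp add: comp_def)
  qed
  finally show ?thesis .
qed

lemma sesq:
  fixes B :: "'v::real_vector \<Rightarrow> 'v \<Rightarrow> real" and C :: "'i \<Rightarrow> complex"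
  assumes l1: "\<And>y. linear (\<lambda>x. B x y)" and l2: "\<And>x. linear (B x)"
  shows "Wf B (\<Sum>a\<in>A. Re (C a) *\<^sub>R R a + Im (C a) *\<^sub>R I a) (\<Sum>a\<in>A. Re (C a) *\<^sub>R I a + (- Im (C a)) *\<^sub>R R a)
             (\<Sum>a\<in>A. Re (C a) *\<^sub>R R a + Im (C a) *\<^sub>R I a) (\<Sum>a\<in>A. Re (C a) *\<^sub>R I a + (- Im (C a)) *\<^sub>R R a)
         = (\<Sum>a\<in>A. \<Sum>b\<in>A. C a * cnj (C b) * Wf B (R a) (I a) (R b) (I b))"
  (is "Wf B ?X ?Y ?X ?Y = ?rhs")
proof -
  note bs = bsum[OF l1 l2]
  note bl = bexp[OF l1 l2]
  have "Re (Wf B ?X ?Y ?X ?Y) = Re ?rhs"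
    unfolding Wf_def by (simp add: bs bl Re_sum sum.distrib[symmetric] sum_divide_distrib algebra_simps)
      (intro sum.cong refl, simp add: field_simps)
  moreover have "Im (Wf B ?X ?Y ?X ?Y) = Im ?rhs"
    unfolding Wf_def by (simp add: bs bl Im_sum sum.distrib[symmetric] sum_divide_distrib sum_subtractf[symmetric] algebra_simps)
      (intro sum.cong refl, simp add: field_simps)
  ultimately show ?thesis by (simp add: complex_eq_iff)
qed

lemma vecX:
  fixes a :: "complex^'n::finite"
  shows "(\<Sum>b\<in>UNIV. Re (optc a b) *\<^sub>R dirR j b + Im (optc a b) *\<^sub>R dirI j b) = ((axis j 1 :: complex^'m::finite), a)"
proof -
  have "(\<Sum>b\<in>UNIV. Re (optc a b) *\<^sub>R dirR j b + Im (optc a b) *\<^sub>R dirI j b) =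
     (axis j 1, 0) + (\<Sum>m\<in>UNIV. Re (a $ m) *\<^sub>R (0, axis m 1) + Im (a $ m) *\<^sub>R (0, axis m \<i>))"
    by (simp add: sum_option optc_def dirR_def dirI_def)
  also have "(\<Sum>m\<in>UNIV. Re (a $ m) *\<^sub>R (0, axis m 1) + Im (a $ m) *\<^sub>R (0, axis m \<i>)) = ((0::complex^'m), a)"
  proof (rule prod_eqI)
    show "fst (\<Sum>m\<in>UNIV. Re (a $ m) *\<^sub>R (0, axis m 1) + Im (a $ m) *\<^sub>R ((0::complex^'m), axis m \<i>)) = fst ((0::complex^'m), a)"
      by (simp add: fst_sum)
    show "snd (\<Sum>m\<in>UNIV. Re (a $ m) *\<^sub>R (0, axis m 1) + Im (a $ m) *\<^sub>R ((0::complex^'m), axis m \<i>)) = snd ((0::complex^'m), a)"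
      by (simp add: snd_sum vec_eq_iff sum_component axis_def complex_eq_iff if_distrib sum.delta cong: if_cong)
  qed
  finally show ?thesis by simp
qed

lemma vecY:
  fixes a :: "complex^'n::finite"
  shows "(\<Sum>b\<in>UNIV. Re (optc a b) *\<^sub>R dirI j b + (- Im (optc a b)) *\<^sub>R dirR j b) = ((axis j \<i> :: complex^'m::finite), \<i> *s a)"
proof -
  have "(\<Sum>b\<in>UNIV. Re (optc a b) *\<^sub>R dirI j b + (- Im (optc a b)) *\<^sub>R dirR j b) =
     (axis j \<i>, 0) + (\<Sum>m\<in>UNIV. Re (a $ m) *\<^sub>R (0, axis m \<i>) + (- Im (a $ m)) *\<^sub>R (0, axis m 1))"
    by (simp add: sum_option optc_def dirR_def dirI_def)
  also have "(\<Sum>m\<in>UNIV. Re (a $ m) *\<^sub>R (0, axis m \<i>) + (- Im (a $ m)) *\<^sub>R (0, axis m 1)) = ((0::complex^'m), \<i> *s a)"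
  proof (rule prod_eqI)
    show "fst (\<Sum>m\<in>UNIV. Re (a $ m) *\<^sub>R (0, axis m \<i>) + (- Im (a $ m)) *\<^sub>R ((0::complex^'m), axis m 1)) = fst ((0::complex^'m), \<i> *s a)"
      by (simp add: fst_sum)
    show "snd (\<Sum>m\<in>UNIV. Re (a $ m) *\<^sub>R (0, axis m \<i>) + (- Im (a $ m)) *\<^sub>R ((0::complex^'m), axis m 1)) = snd ((0::complex^'m), \<i> *s a)"
      by (simp add: snd_sum vec_eq_iff sum_component axis_def complex_eq_iff if_distrib sum.delta cong: if_cong)
  qed
  finally show ?thesis by simp
qed

lemma Wf_add: "Wf (\<lambda>a b. B1 a b + B2 a b) r1 i1 r2 i2 = Wf B1 r1 i1 r2 i2 + Wf B2 r1 i1 r2 i2"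
  by (simp add: Wf_def add_divide_distrib diff_divide_distrib algebra_simps)

lemma comp:
  fixes F :: "(complex^'m::finite) \<times> (complex^'n::finite) \<Rightarrow> real" and f :: "complex^'m \<Rightarrow> complex^'n"
  assumes S: "open S" and FC: "Ck 2 S F" and U: "open U" and z: "z \<in> U"
    and inS: "\<And>q. q \<in> U \<Longrightarrow> (q, f q) \<in> S"
    and fder: "\<And>q. q \<in> U \<Longrightarrow> (f has_derivative Df q) (at q)"
    and fcl: "\<And>c v. Df z (c *s v) = c *s Df z v"
    and f2: "\<And>v. ((\<lambda>q. Df q v) has_derivative D2 v) (at z)"
  shows "cLap (\<lambda>q. F (q, f q)) z = (\<Sum>j\<in>UNIV. qf (hessJ F (z, f z) j) (Df z (axis j 1))
     + Wf (\<lambda>a b. frechet_derivative F (at (z, f z)) (0, D2 a b)) (axis j 1) (axis j \<i>) (axis j 1) (axis j \<i>))"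
proof -
  define p where "p = (z, f z)"
  have pS: "p \<in> S" using inS[OF z] by (simp add: p_def)
  have d2h: "d2 (\<lambda>q. F (q, f q)) z = (\<lambda>v w. d2 F p (v, Df z v) (w, Df z w) + frechet_derivative F (at p) (0, D2 v w))"
    unfolding p_def by (intro ext chain2[OF S FC U z inS fder f2])
  have wterm: "wirt (\<lambda>q. F (q, f q)) z (axis j 1) (axis j \<i>) (axis j 1) (axis j \<i>) =
     qf (hessJ F p j) (Df z (axis j 1)) + Wf (\<lambda>a b. frechet_derivative F (at p) (0, D2 a b)) (axis j 1) (axis j \<i>) (axis j 1) (axis j \<i>)"
    for j
  proof -
    define a where "a = Df z (axis j 1)"
    have ai: "Df z (axis j \<i>) = \<i> *s a"
      unfolding a_def using fcl[of \<i> "axis j 1"] by (simp add: axis_smult[of j \<i>])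
    have l1: "\<And>y. linear (\<lambda>x. d2 F p x y)" using d2_linear_v[OF S FC pS] by blast
    have l2: "\<And>x. linear (d2 F p x)" using d2_linear_w[OF FC pS] by (metis eta_contract_eq)
    have "wirt (\<lambda>q. F (q, f q)) z (axis j 1) (axis j \<i>) (axis j 1) (axis j \<i>) =
        Wf (d2 F p) (axis j 1, a) (axis j \<i>, \<i> *s a) (axis j 1, a) (axis j \<i>, \<i> *s a) +
        Wf (\<lambda>a b. frechet_derivative F (at p) (0, D2 a b)) (axis j 1) (axis j \<i>) (axis j 1) (axis j \<i>)"
      unfolding wirt_Wf d2h Wf_add by (simp add: Wf_def a_def[symmetric] ai)
    also have "Wf (d2 F p) (axis j 1, a) (axis j \<i>, \<i> *s a) (axis j 1, a) (axis j \<i>, \<i> *s a) =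
        (\<Sum>x\<in>UNIV. \<Sum>y\<in>UNIV. optc a x * cnj (optc a y) * Wf (d2 F p) (dirR j x) (dirI j x) (dirR j y) (dirI j y))"
      using sesq[OF l1 l2, of "optc a" "dirR j" "dirI j" UNIV] unfolding vecX vecY .
    also have "\<dots> = qf (hessJ F p j) a"
      by (simp add: qf_def hessJ_def wirt_Wf)
    finally show ?thesis by (simp add: a_def)
  qed
  show ?thesis unfolding cLap_def wterm p_def ..
qed

lemma herm_hessJ:
  assumes S: "open S" and FC: "Ck 2 S F" and p: "p \<in> S"
  shows "hessJ F p j $ b $ a = cnj (hessJ F p j $ a $ b)"
proof -
  have sw: "\<And>v w. d2 F p v w = d2 F p w v" by (rule schwarz[OF S FC p])
  show ?thesis
    by (simp add: hessJ_def wirt_def complex_eq_iff) (simp add: sw[of "dirR j b"] sw[of "dirI j b"] field_simps)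
qed

lemma hessX_sub: "hessX F p = (\<chi> m l. hessJ F p j $ Some m $ Some l)"
  by (simp add: hessX_def hessJ_def dirR_def dirI_def vec_eq_iff)

lemma qf_val:
  assumes S: "open S" and FC: "Ck 2 S F" and p: "p \<in> S" and pos: "pos_herm (hessX F p)"
    and eq: "\<And>l. (\<Sum>m\<in>UNIV. c0 $ m * hessJ F p j $ Some m $ Some l) = - hessJ F p j $ None $ Some l"
  shows "qf (hessJ F p j) c0 = det (hessJ F p j) / det (hessX F p)"
    and "Re (qf (hessJ F p j) c0) \<le> Re (qf (hessJ F p j) c)"
proof -
  have herm: "\<And>a b. hessJ F p j $ b $ a = cnj (hessJ F p j $ a $ b)" by (rule herm_hessJ[OF S FC p])
  have pos': "pos_herm (\<chi> m l. hessJ F p j $ Some m $ Some l)" using pos hessX_sub[of F p j] by simp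
  note mq = minq[OF herm pos' eq]
  have dz: "det (hessX F p) \<noteq> 0" by (rule pos_det[OF pos])
  have "det (hessJ F p j) = qf (hessJ F p j) c0 * det (hessX F p)"
    using det_schur[OF eq] mq(1) hessX_sub[of F p j] by simp
  then show "qf (hessJ F p j) c0 = det (hessJ F p j) / det (hessX F p)" using dz by simp
  show "Re (qf (hessJ F p j) c0) \<le> Re (qf (hessJ F p j) c)" by (rule mq(2))
qed

lemma exists_c0:
  assumes pos: "pos_herm (hessX F p)"
  shows "\<exists>c0. \<forall>l. (\<Sum>m\<in>UNIV. c0 $ m * hessJ F p j $ Some m $ Some l) = - hessJ F p j $ None $ Some l"
proof -
  have dz: "det (hessX F p) \<noteq> 0" by (rule pos_det[OF pos])
  obtain c where c: "\<forall>l. (\<Sum>m\<in>UNIV. c $ m * hessX F p $ m $ l) = (\<chi> l. - hessJ F p j $ None $ Some l) $ l"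
    using solve_lin[OF dz] by blast
  then show ?thesis by (auto simp: hessX_sub[of F p j])
qed

lemma holo_props:
  assumes hol: "holo_on U f" and q: "q \<in> U"
  shows "(f has_derivative frechet_derivative f (at q)) (at q)"
    and "frechet_derivative f (at q) (c *s w) = c *s frechet_derivative f (at q) w"
proof -
  have ex: "\<exists>L. (f has_derivative L) (at q) \<and> (\<forall>c v. L (c *s v) = c *s L v)"
    using hol q unfolding holo_on_def by (rule bspec)
  then obtain L where L1: "(f has_derivative L) (at q)" and L2: "\<forall>c v. L (c *s v) = c *s L v"
    by (elim exE conjE)
  have e: "frechet_derivative f (at q) = L" by (rule frechet_derivative_at[OF L1, symmetric])
  show "(f has_derivative frechet_derivative f (at q)) (at q)" unfolding e by (rule L1)
  show "frechet_derivative f (at q) (c *s w) = c *s frechet_derivative f (at q) w" unfolding e using L2 by simp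
qed

lemma blin_smult: "bounded_linear (\<lambda>x::complex^'n. c *s x)"
proof -
  have "linear (\<lambda>x::complex^'n. c *s x)"
    by (rule linearI) (simp_all add: vec_eq_iff algebra_simps scaleR_conv_of_real)
  then show ?thesis using linear_conv_bounded_linear by blast
qed

lemma part1:
  fixes F :: "(complex^'m::finite) \<times> (complex^'n::finite) \<Rightarrow> real"
  assumes S: "open (D \<times> W)" and FC: "Ck 2 (D \<times> W) F"
    and pos: "\<forall>z\<in>D. \<forall>x\<in>W. pos_herm (hessX F (z, x))"
    and U: "open U" and UD: "U \<subseteq> D" and fW: "f ` U \<subseteq> W" and hol: "holo_on U f" and z: "z \<in> U"
  shows "Re (\<Sum>j\<in>UNIV. det (hessJ F (z, f z) j) / det (hessX F (z, f z))) \<le> Re (cLap (\<lambda>q. F (q, f q)) z)"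
proof -
  define Df where "Df = (\<lambda>q. frechet_derivative f (at q))"
  define D2 where "D2 = (\<lambda>v. frechet_derivative (\<lambda>q. Df q v) (at z))"
  define p where "p = (z, f z)"
  have inS: "\<And>q. q \<in> U \<Longrightarrow> (q, f q) \<in> D \<times> W" using UD fW by auto
  have pS: "p \<in> D \<times> W" using inS[OF z] by (simp add: p_def)
  have posp: "pos_herm (hessX F p)" using pos pS by (auto simp: p_def)
  have fder: "\<And>q. q \<in> U \<Longrightarrow> (f has_derivative Df q) (at q)"
    unfolding Df_def by (rule holo_props(1)[OF hol])
  have fcl: "\<And>q c v. q \<in> U \<Longrightarrow> Df q (c *s v) = c *s Df q v"
    unfolding Df_def by (rule holo_props(2)[OF hol])
  have f2: "((\<lambda>q. Df q v) has_derivative D2 v) (at z)" and d2cl: "D2 v (c *s w) = c *s D2 v w" for v c w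
  proof -
    obtain L where L: "((\<lambda>q. Df q v) has_derivative L) (at z)" "\<forall>c w. L (c *s w) = c *s L w"
      using holo_vec[OF U hol z, of v] unfolding Df_def by blast
    have e: "D2 v = L" unfolding D2_def by (rule frechet_derivative_at[OF L(1), symmetric])
    show "((\<lambda>q. Df q v) has_derivative D2 v) (at z)" using L(1) e by simp
    show "D2 v (c *s w) = c *s D2 v w" using L(2) e by simp
  qed
  have comp': "cLap (\<lambda>q. F (q, f q)) z = (\<Sum>j\<in>UNIV. qf (hessJ F p j) (Df z (axis j 1))
     + Wf (\<lambda>a b. frechet_derivative F (at p) (0, D2 a b)) (axis j 1) (axis j \<i>) (axis j 1) (axis j \<i>))"
    unfolding p_def by (rule comp[OF S FC U z inS fder fcl[OF z] f2])
  have lin: "linear (frechet_derivative F (at p))" by (rule C2_lin1[OF FC pS])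
  have corr: "Re (Wf (\<lambda>a b. frechet_derivative F (at p) (0, D2 a b)) (axis j 1) (axis j \<i>) (axis j 1) (axis j \<i>)) = 0" for j
  proof -
    define e where "e = (axis j 1 :: complex^'m)"
    have ie: "axis j \<i> = \<i> *s e" unfolding e_def by (rule axis_smult)
    have "((\<lambda>q. \<i> *s Df q e) has_derivative (\<lambda>w. \<i> *s D2 e w)) (at z)"
      by (rule bounded_linear.has_derivative[OF blin_smult f2])
    then have "((\<lambda>q. Df q (\<i> *s e)) has_derivative (\<lambda>w. \<i> *s D2 e w)) (at z)"
      by (rule has_derivative_transform_within_open[OF _ U z]) (simp add: fcl)
    then have "D2 (\<i> *s e) = (\<lambda>w. \<i> *s D2 e w)" unfolding D2_def by (rule frechet_derivative_at[symmetric])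
    then have "D2 (\<i> *s e) (\<i> *s e) = - D2 e e" by (simp add: d2cl vector_smult_assoc)
    then have "D2 (axis j \<i>) (axis j \<i>) = - D2 e e" by (simp add: ie)
    moreover have "frechet_derivative F (at p) (0, - x) = - frechet_derivative F (at p) (0, x)" for x
      using linear_neg[OF lin, of "(0, x)"] by simp
    ultimately show ?thesis by (simp add: Wf_def e_def)
  qed
  have "\<forall>j. \<exists>c0. \<forall>l. (\<Sum>m\<in>UNIV. c0 $ m * hessJ F p j $ Some m $ Some l) = - hessJ F p j $ None $ Some l"
    using exists_c0[OF posp] by blast
  then obtain c0 where c0: "\<And>j l. (\<Sum>m\<in>UNIV. c0 j $ m * hessJ F p j $ Some m $ Some l) = - hessJ F p j $ None $ Some l"
    by metis
  have "Re (\<Sum>j\<in>UNIV. det (hessJ F p j) / det (hessX F p)) = (\<Sum>j\<in>UNIV. Re (qf (hessJ F p j) (c0 j)))"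
    by (simp add: Re_sum qf_val(1)[OF S FC pS posp c0])
  also have "\<dots> \<le> (\<Sum>j\<in>UNIV. Re (qf (hessJ F p j) (Df z (axis j 1))))"
    by (intro sum_mono qf_val(2)[OF S FC pS posp c0])
  also have "\<dots> = Re (cLap (\<lambda>q. F (q, f q)) z)"
    unfolding comp' by (simp add: Re_sum corr)
  finally show ?thesis by (simp add: p_def)
qed

lemma part2:
  fixes F :: "(complex^'m::finite) \<times> (complex^'n::finite) \<Rightarrow> real"
  assumes D: "open D" and W: "open W" and FC: "Ck 2 (D \<times> W) F"
    and pos: "\<forall>z\<in>D. \<forall>x\<in>W. pos_herm (hessX F (z, x))"
    and z0: "z0 \<in> D" and x0: "x0 \<in> W"
  shows "\<exists>U f. open U \<and> z0 \<in> U \<and> U \<subseteq> D \<and> f ` U \<subseteq> W \<and> holo_on U f \<and> f z0 = x0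
     \<and> cLap (\<lambda>z. F (z, f z)) z0 = (\<Sum>j\<in>UNIV. det (hessJ F (z0, x0) j) / det (hessX F (z0, x0)))"
proof -
  define p where "p = (z0, x0)"
  have S: "open (D \<times> W)" by (rule open_Times[OF D W])
  have pS: "p \<in> D \<times> W" using z0 x0 by (simp add: p_def)
  have posp: "pos_herm (hessX F p)" using pos z0 x0 by (simp add: p_def)
  have "\<forall>j. \<exists>c0. \<forall>l. (\<Sum>m\<in>UNIV. c0 $ m * hessJ F p j $ Some m $ Some l) = - hessJ F p j $ None $ Some l"
    using exists_c0[OF posp] by blast
  then obtain c0 where c0: "\<And>j l. (\<Sum>m\<in>UNIV. c0 j $ m * hessJ F p j $ Some m $ Some l) = - hessJ F p j $ None $ Some l"
    by metis
  define Lm where "Lm = (\<lambda>v::complex^'m. \<Sum>j\<in>UNIV. v $ j *s c0 j)"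
  define f where "f = (\<lambda>z. x0 + Lm (z - z0))"
  have linL: "linear Lm"
  proof (rule linearI)
    show "Lm (b1 + b2) = Lm b1 + Lm b2" for b1 b2
      by (simp add: Lm_def vec_eq_iff sum_component sum.distrib algebra_simps)
    show "Lm (r *\<^sub>R b) = r *\<^sub>R Lm b" for r b
      by (simp add: Lm_def vec_eq_iff sum_component scaleR_sum_right)
  qed
  have blL: "bounded_linear Lm" using linL linear_conv_bounded_linear by blast
  have clL: "Lm (c *s v) = c *s Lm v" for c v
    by (simp add: Lm_def vec_eq_iff sum_component sum_distrib_left algebra_simps)
  have LmE: "Lm (axis j 1) = c0 j" for j
  proof -
    have "Lm (axis j 1) = (\<Sum>x\<in>UNIV. if x = j then c0 x else 0)"
      unfolding Lm_def by (rule sum.cong) (auto simp: axis_def)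
    then show ?thesis by simp
  qed
  have fder: "(f has_derivative Lm) (at q)" for q
  proof -
    have "((\<lambda>z. z - z0) has_derivative (\<lambda>h. h - 0)) (at q)"
      by (rule has_derivative_diff[OF has_derivative_ident has_derivative_const])
    then have "((\<lambda>z. Lm (z - z0)) has_derivative (\<lambda>h. Lm h)) (at q)"
      using bounded_linear.has_derivative[OF blL] by fastforce
    then have "((\<lambda>z. x0 + Lm (z - z0)) has_derivative (\<lambda>h. 0 + Lm h)) (at q)"
      by (rule has_derivative_add[OF has_derivative_const])
    then show ?thesis unfolding f_def by simp
  qed
  have fz0: "f z0 = x0" by (simp add: f_def linear_0[OF linL])
  define U where "U = D \<inter> f -` W"
  have contf: "continuous (at x) f" for x using has_derivative_continuous[OF fder] .
  have U: "open U" unfolding U_def by (intro open_Int D continuous_open_vimage[OF W contf])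
  have z0U: "z0 \<in> U" using z0 x0 fz0 by (simp add: U_def)
  have UD: "U \<subseteq> D" and fW: "f ` U \<subseteq> W" by (auto simp: U_def)
  have hol: "holo_on U f" unfolding holo_on_def using fder clL by blast
  have inS: "\<And>q. q \<in> U \<Longrightarrow> (q, f q) \<in> D \<times> W" using UD fW by auto
  have f2: "((\<lambda>q. Lm v) has_derivative (\<lambda>w. 0)) (at z0)" for v by (rule has_derivative_const)
  have comp': "cLap (\<lambda>q. F (q, f q)) z0 = (\<Sum>j\<in>UNIV. qf (hessJ F (z0, f z0) j) (Lm (axis j 1))
     + Wf (\<lambda>a b. frechet_derivative F (at (z0, f z0)) (0, (\<lambda>v w. 0) a b)) (axis j 1) (axis j \<i>) (axis j 1) (axis j \<i>))"
    by (rule comp[OF S FC U z0U inS fder clL f2])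
  have lin: "linear (frechet_derivative F (at p))" by (rule C2_lin1[OF FC pS])
  have z00: "frechet_derivative F (at p) (0, 0) = 0" using linear_0[OF lin] by (simp add: zero_prod_def)
  have "cLap (\<lambda>q. F (q, f q)) z0 = (\<Sum>j\<in>UNIV. qf (hessJ F p j) (c0 j))"
    unfolding comp' fz0 p_def[symmetric] using z00 by (simp add: Wf_def LmE)
  also have "\<dots> = (\<Sum>j\<in>UNIV. det (hessJ F p j) / det (hessX F p))"
    by (simp add: qf_val(1)[OF S FC pS posp c0])
  finally have "cLap (\<lambda>q. F (q, f q)) z0 = (\<Sum>j\<in>UNIV. det (hessJ F (z0, x0) j) / det (hessX F (z0, x0)))"
    by (simp add: p_def)
  then show ?thesis using U z0U UD fW hol fz0 by blast
qed

theorem lemma3p1: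
  fixes D :: "(complex^'m) set" and W :: "(complex^'n) set"
    and u :: "(complex^'m::finite) \<times> (complex^'n::finite) \<Rightarrow> real" and \<psi> :: "complex^'n \<Rightarrow> real"
  assumes D: "open D" and W: "open W"
    and u: "Ck 2 (D \<times> W) u"
    and psi: "smooth_on W \<psi>"
    and kaehler: "\<forall>x\<in>W. pos_herm (hessX (\<lambda>(z::complex^'m, y). \<psi> y) (0, x))"
    and pos: "\<forall>z\<in>D. \<forall>x\<in>W. pos_herm (hessX (\<lambda>(z, y). u (z, y) + \<psi> y) (z, x))"
  shows "(\<forall>U f. open U \<and> U \<subseteq> D \<and> f ` U \<subseteq> W \<and> holo_on U f \<longrightarrow>
            (\<forall>z\<in>U. Re (\<Sum>j\<in>UNIV.
                 det (hessJ (\<lambda>(z, y). u (z, y) + \<psi> y) (z, f z) j)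
                 / det (hessX (\<lambda>(z, y). u (z, y) + \<psi> y) (z, f z)))
               \<le> Re (cLap (\<lambda>z. \<psi> (f z) + u (z, f z)) z)))
       \<and> (\<forall>z0\<in>D. \<forall>x0\<in>W. \<exists>U f. open U \<and> z0 \<in> U \<and> U \<subseteq> D \<and> f ` U \<subseteq> W \<and> holo_on U f
            \<and> f z0 = x0
            \<and> cLap (\<lambda>z. \<psi> (f z) + u (z, f z)) z0 =
               (\<Sum>j\<in>UNIV. det (hessJ (\<lambda>(z, y). u (z, y) + \<psi> y) (z0, x0) j)
                 / det (hessX (\<lambda>(z, y). u (z, y) + \<psi> y) (z0, x0))))"
proof -
  define F where "F = (\<lambda>(z::complex^'m, y::complex^'n). u (z, y) + \<psi> y)"
  have S: "open (D \<times> W)" by (rule open_Times[OF D W])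
  have psi2: "Ck 2 W \<psi>" using psi unfolding smooth_on_def by blast
  have "Ck 2 (D \<times> W) (\<lambda>p. u p + \<psi> (snd p))" by (rule Ck_add[OF S u Ck_snd[OF D W psi2]])
  then have FC: "Ck 2 (D \<times> W) F"
    by (rule Ck_cong[OF S, rotated]) (auto simp: F_def)
  have posF: "\<forall>z\<in>D. \<forall>x\<in>W. pos_herm (hessX F (z, x))" using pos unfolding F_def .
  have h: "(\<lambda>z. \<psi> (f z) + u (z, f z)) = (\<lambda>z. F (z, f z))" for f :: "complex^'m \<Rightarrow> complex^'n"
    by (simp add: F_def fun_eq_iff)
  have P1: "\<forall>U f. open U \<and> U \<subseteq> D \<and> f ` U \<subseteq> W \<and> holo_on U f \<longrightarrow>
            (\<forall>z\<in>U. Re (\<Sum>j\<in>UNIV. det (hessJ F (z, f z) j) / det (hessX F (z, f z)))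
               \<le> Re (cLap (\<lambda>z. \<psi> (f z) + u (z, f z)) z))"
    unfolding h using part1[OF S FC posF] by blast
  have P2: "\<forall>z0\<in>D. \<forall>x0\<in>W. \<exists>U f. open U \<and> z0 \<in> U \<and> U \<subseteq> D \<and> f ` U \<subseteq> W \<and> holo_on U f
            \<and> f z0 = x0
            \<and> cLap (\<lambda>z. \<psi> (f z) + u (z, f z)) z0 =
               (\<Sum>j\<in>UNIV. det (hessJ F (z0, x0) j) / det (hessX F (z0, x0)))"
    unfolding h using part2[OF D W FC posF] by blast
  show ?thesis using P1 P2 unfolding F_def by blast
qed

end
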